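(* Let $\alpha\in(0,1)$ be irrational, and let $A_n,B_n,C_n$ be as defined in the context, so that $P_{q_n}(\alpha)=A_nB_nC_n$. Let $(\tau_n)_{n\in\mathbb N}$ and $(\kappa_n)_{n\in\mathbb N}$ be eventually increasing sequences of natural numbers with $\tau_n,\kappa_n=O(q_n^{1/2})$. Then for all sufficiently large $n$, $$A_n=2\pi c_n\big(1+O(\Lambda_n^2)\big),$$ $$\log(B_n)=-2\pi^2\frac{c_n}{q_n^2}\sum_{t=1}^{M_n-1}\frac{D_t(\alpha_n^-)}{\sin(\pi t/q_n)\sin(\pi(t+1)/q_n)}-2\sum_{t=1}^{\tau_n}\sum_{j=2}^{\tau_n}\frac1j\Big(\frac{c_n\xi_{nt}}{t}\Big)^j+O(\tau_n^{-1}),$$ $$C_n=\prod_{t=1}^{\kappa_n}\Big(1-\frac1{4(t/c_n-\xi_{nt})^2}\Big)+O(\kappa_n^{-1}).$$ Here $M_n=\lfloor(q_n-1)/2\rfloor$, and $\xi_{nt}=\{tq_{n-1}/q_n\}-\frac12$ for $t\in\{0,\ldots,q_n-1\}$.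
   Context: Continued fraction and convergent notation: - $\alpha=[0;a_1,a_2,\ldots]$. - $q_0=0$, $q_1=1$, $q_{n+1}=a_nq_n+q_{n-1}$, and $p_0=1$, $p_1=0$, $p_{n+1}=a_np_n+p_{n-1}$. - $\Lambda_n=q_n\alpha-p_n$. - $\alpha_n^+=[a_n;a_{n+1},\ldots]$ and $\alpha_n^-=[0;a_{n-1},\ldots,a_1]=q_{n-1}/q_n$. - $c_n=1/(\alpha_n^++\alpha_n^-)$. - $D_t(\beta)=\sum_{s=1}^t(\{\beta s\}-\frac12)$. The three factors: - $P_N(\alpha)=\prod_{r=1}^N|2\sin(\pi r\alpha)|$. - $s_{nt}=2\sin\big(\pi[t/q_n-|\Lambda_n|(\{tq_{n-1}/q_n\}-\frac12)]\big)$. - $A_n=|2q_n\sin(\pi\Lambda_n)|$. - $B_n=\big|\prod_{t=1}^{q_n-1}\frac{s_{nt}}{2\sin(\pi t/q_n)}\big|$. - $C_n=\prod_{t=1}^{q_n-1}\big(1-s_{n0}^2/s_{nt}^2\big)^{1/2}$. The $O$-terms have constants independent of $n$. *)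

theory Defs
  imports Complex_Main "HOL-Library.Landau_Symbols"
begin

fun cf_rem :: "real \<Rightarrow> nat \<Rightarrow> real" where
  "cf_rem x 0 = x"
| "cf_rem x (Suc k) = frac (1 / cf_rem x k)"

definition cf_a :: "real \<Rightarrow> nat \<Rightarrow> nat" where
  "cf_a x k = (if k = 0 then 0 else nat \<lfloor>1 / cf_rem x (k - 1)\<rfloor>)"

text \<open>Paper's indexing: q_0 = 0, q_1 = 1, q_(n+1) = a_n q_n + q_(n-1);
  p_0 = 1, p_1 = 0, p_(n+1) = a_n p_n + p_(n-1).\<close>
fun cf_q :: "real \<Rightarrow> nat \<Rightarrow> nat" where
  "cf_q x 0 = 0"
| "cf_q x (Suc 0) = 1"
| "cf_q x (Suc (Suc n)) = cf_a x (Suc n) * cf_q x (Suc n) + cf_q x n"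

fun cf_p :: "real \<Rightarrow> nat \<Rightarrow> nat" where
  "cf_p x 0 = 1"
| "cf_p x (Suc 0) = 0"
| "cf_p x (Suc (Suc n)) = cf_a x (Suc n) * cf_p x (Suc n) + cf_p x n"

definition Lam :: "real \<Rightarrow> nat \<Rightarrow> real" where
  "Lam x n = real (cf_q x n) * x - real (cf_p x n)"

text \<open>alpha_n^+ = [a_n; a_(n+1), ...], the n-th complete quotient 1 / r_(n-1) (n >= 1).\<close>
definition alpha_plus :: "real \<Rightarrow> nat \<Rightarrow> real" where
  "alpha_plus x n = 1 / cf_rem x (n - 1)"

text \<open>alpha_n^- = [0; a_(n-1), ..., a_1] = q_(n-1) / q_n.\<close>
definition alpha_minus :: "real \<Rightarrow> nat \<Rightarrow> real" where
  "alpha_minus x n = real (cf_q x (n - 1)) / real (cf_q x n)"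

definition cc :: "real \<Rightarrow> nat \<Rightarrow> real" where
  "cc x n = 1 / (alpha_plus x n + alpha_minus x n)"

definition Dsum :: "nat \<Rightarrow> real \<Rightarrow> real" where
  "Dsum t \<beta> = (\<Sum>s = 1..t. frac (\<beta> * real s) - 1 / 2)"

definition xi :: "real \<Rightarrow> nat \<Rightarrow> nat \<Rightarrow> real" where
  "xi x n t = frac (real t * real (cf_q x (n - 1)) / real (cf_q x n)) - 1 / 2"

definition s_nt :: "real \<Rightarrow> nat \<Rightarrow> nat \<Rightarrow> real" where
  "s_nt x n t = 2 * sin (pi * (real t / real (cf_q x n) - \<bar>Lam x n\<bar> * xi x n t))"

definition A_n :: "real \<Rightarrow> nat \<Rightarrow> real" where
  "A_n x n = \<bar>2 * real (cf_q x n) * sin (pi * Lam x n)\<bar>"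

definition B_n :: "real \<Rightarrow> nat \<Rightarrow> real" where
  "B_n x n = \<bar>\<Prod>t = 1..cf_q x n - 1. s_nt x n t / (2 * sin (pi * real t / real (cf_q x n)))\<bar>"

definition C_n :: "real \<Rightarrow> nat \<Rightarrow> real" where
  "C_n x n = (\<Prod>t = 1..cf_q x n - 1. sqrt (1 - (s_nt x n 0)\<^sup>2 / (s_nt x n t)\<^sup>2))"

definition M_n :: "real \<Rightarrow> nat \<Rightarrow> nat" where
  "M_n x n = (cf_q x n - 1) div 2"

end

theory Submission
  imports Defs
begin

lemma sin_cube_bound: fixes x :: real shows "\<bar>sin x - x\<bar> \<le> \<bar>x\<bar>^3 / 6"
proof -
  have a: "\<bar>sin x - (\<Sum>m<3. sin_coeff m * x ^ m)\<bar> \<le> inverse (fact 3) * \<bar>x\<bar> ^ 3"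
    by (rule Maclaurin_sin_bound)
  have b: "(\<Sum>m<3. sin_coeff m * x ^ m) = x"
    by (simp add: eval_nat_numeral sin_coeff_def)
  have c: "inverse (fact 3 :: real) = 1/6"
    by (simp add: fact_numeral)
  show ?thesis using a unfolding b c by simp
qed

lemma one_minus_cos_bound: fixes x :: real shows "0 \<le> 1 - cos x \<and> 1 - cos x \<le> x^2 / 2"
proof -
  have c: "cos x = 1 - 2 * sin (x/2) ^ 2" using cos_double_sin[of "x/2"] by simp
  have "\<bar>sin (x/2)\<bar> ^ 2 \<le> \<bar>x/2\<bar>^2"
    using abs_sin_x_le_abs_x[of "x/2"] by (intro power_mono) auto
  then have "sin (x/2) ^ 2 \<le> (x/2)^2" by (simp add: power2_abs power_divide)
  then show ?thesis unfolding c by (simp add: power_divide)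
qed

lemma sin_ge_third: fixes x :: real assumes "0 \<le> x" "x \<le> 2" shows "x / 3 \<le> sin x"
proof -
  have "\<bar>sin x - x\<bar> \<le> x^3/6" using sin_cube_bound[of x] assms by simp
  moreover have "x^2 \<le> 4" using assms power_mono[of x 2 2] by simp
  then have "x^3 \<le> 4 * x" using assms mult_left_mono[of "x^2" 4 x]
    by (simp add: power3_eq_cube power2_eq_square mult.assoc)
  ultimately show ?thesis by linarith
qed

lemma sin_pos_half: fixes x :: real assumes "0 < x" "x \<le> pi/2" shows "0 < sin x"
  using assms sin_gt_zero[of x] pi_gt_zero by linarith

lemma sin_ge_third': fixes x :: real assumes "0 \<le> x" "x \<le> pi/2" shows "x / 3 \<le> sin x"
  using sin_ge_third[of x] assms pi_half_less_two by linarith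

lemma cot_vs_inv: fixes x :: real assumes "0 < x" "x \<le> pi/2"
  shows "\<bar>cos x / sin x - 1 / x\<bar> \<le> 2 * x"
proof -
  have s: "x/3 \<le> sin x" using sin_ge_third' assms by simp
  have sp: "0 < sin x" using sin_pos_half assms by simp
  have e: "cos x / sin x - 1 / x = (x * cos x - sin x) / (x * sin x)"
    using assms sp by (simp add: field_simps)
  have c1: "\<bar>sin x - x\<bar> \<le> x^3/6" using sin_cube_bound[of x] assms by simp
  have c2: "0 \<le> x * (1 - cos x) \<and> x * (1 - cos x) \<le> x * (x^2/2)"
    using one_minus_cos_bound[of x] assms by (simp add: mult_left_mono)
  have "\<bar>x * cos x - sin x\<bar> \<le> x^3/2"
  proof -
    have "x * cos x - sin x = (x - sin x) - x * (1 - cos x)" by (simp add: algebra_simps)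
    moreover have "x * (x^2/2) = x^3/2" by (simp add: power3_eq_cube power2_eq_square)
    moreover have "sin x \<le> x" using sin_x_le_x assms by simp
    ultimately show ?thesis using c1 c2 unfolding abs_le_iff by linarith
  qed
  moreover have "x * (x/3) \<le> x * sin x" using s assms by (simp add: mult_left_mono)
  ultimately have "\<bar>x * cos x - sin x\<bar> / (x * sin x) \<le> (x^3/2) / (x * (x/3))"
    using assms sp by (intro frac_le) auto
  also have "(x^3/2) / (x * (x/3)) = 3 * x / 2" using assms
    by (simp add: power3_eq_cube field_simps)
  finally have "\<bar>cos x / sin x - 1 / x\<bar> \<le> 3 * x / 2" unfolding e using assms sp
    by (simp add: abs_divide abs_mult)
  then show ?thesis using assms by linarith
qed

lemma cf_rem_props:
  assumes "0 < x" "x < 1" "x \<notin> \<rat>"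
  shows "0 < cf_rem x k \<and> cf_rem x k < 1 \<and> cf_rem x k \<notin> \<rat>"
proof (induction k)
  case 0 then show ?case using assms by simp
next
  case (Suc k)
  let ?r = "cf_rem x k"
  have r: "0 < ?r" "?r < 1" "?r \<notin> \<rat>" using Suc by auto
  have i: "1 / ?r \<notin> \<rat>"
  proof
    assume "1 / ?r \<in> \<rat>"
    then have "1 / (1 / ?r) \<in> \<rat>" by (rule Rats_divide[OF Rats_1])
    then show False using r by simp
  qed
  have f: "frac (1 / ?r) \<notin> \<rat>"
  proof
    assume a: "frac (1 / ?r) \<in> \<rat>"
    have "1 / ?r = frac (1 / ?r) + of_int \<lfloor>1 / ?r\<rfloor>" by (simp add: frac_def)
    also have "\<dots> \<in> \<rat>" using a by (intro Rats_add) auto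
    finally show False using i by simp
  qed
  have "frac (1 / ?r) \<noteq> 0" using f by (metis Rats_0)
  then have "0 < frac (1 / ?r)" using frac_ge_0 by (metis order_le_less)
  then show ?case using f frac_lt_1 by simp
qed

lemma cf_a_rel:
  assumes "0 < x" "x < 1" "x \<notin> \<rat>"
  shows "real (cf_a x (Suc k)) + cf_rem x (Suc k) = 1 / cf_rem x k"
    and "1 \<le> cf_a x (Suc k)"
proof -
  let ?r = "cf_rem x k"
  have r: "0 < ?r" "?r < 1" using cf_rem_props[OF assms] by auto
  have g: "1 < 1 / ?r" using r by simp
  then have fl: "1 \<le> \<lfloor>1 / ?r\<rfloor>" by (simp add: le_floor_iff)
  have "real (nat \<lfloor>1 / ?r\<rfloor>) = of_int \<lfloor>1 / ?r\<rfloor>"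
    by (rule of_nat_nat) (use fl in linarith)
  then have e: "real (cf_a x (Suc k)) = of_int \<lfloor>1 / ?r\<rfloor>"
    by (simp add: cf_a_def)
  then show "real (cf_a x (Suc k)) + cf_rem x (Suc k) = 1 / cf_rem x k"
    by (simp add: frac_def)
  have "(1::real) \<le> of_int \<lfloor>1 / ?r\<rfloor>" using fl by linarith
  then have "(1::real) \<le> real (cf_a x (Suc k))" using e by simp
  then show "1 \<le> cf_a x (Suc k)" by simp
qed

lemma cf_invariant:
  assumes "0 < x" "x < 1" "x \<notin> \<rat>"
  shows "x * (real (cf_q x (Suc n)) + cf_rem x n * real (cf_q x n))
       = real (cf_p x (Suc n)) + cf_rem x n * real (cf_p x n)"
proof (induction n)
  case 0 then show ?case by simp
next
  case (Suc n)
  let ?r = "cf_rem x n" and ?r' = "cf_rem x (Suc n)" and ?a = "real (cf_a x (Suc n))"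
  have r: "0 < ?r" using cf_rem_props[OF assms] by auto
  have ar: "?a + ?r' = 1 / ?r" using cf_a_rel[OF assms] by simp
  have q: "real (cf_q x (Suc (Suc n))) + ?r' * real (cf_q x (Suc n))
        = (real (cf_q x (Suc n)) + ?r * real (cf_q x n)) / ?r"
  proof -
    have "real (cf_q x (Suc (Suc n))) + ?r' * real (cf_q x (Suc n))
       = (?a + ?r') * real (cf_q x (Suc n)) + real (cf_q x n)"
      by (simp add: algebra_simps)
    also have "\<dots> = (real (cf_q x (Suc n)) + ?r * real (cf_q x n)) / ?r"
      unfolding ar using r by (simp add: field_simps)
    finally show ?thesis .
  qed
  have p: "real (cf_p x (Suc (Suc n))) + ?r' * real (cf_p x (Suc n))
        = (real (cf_p x (Suc n)) + ?r * real (cf_p x n)) / ?r"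
  proof -
    have "real (cf_p x (Suc (Suc n))) + ?r' * real (cf_p x (Suc n))
       = (?a + ?r') * real (cf_p x (Suc n)) + real (cf_p x n)"
      by (simp add: algebra_simps)
    also have "\<dots> = (real (cf_p x (Suc n)) + ?r * real (cf_p x n)) / ?r"
      unfolding ar using r by (simp add: field_simps)
    finally show ?thesis .
  qed
  show ?case unfolding q p using Suc by (simp add: field_simps)
qed

lemma cf_det: "real (cf_q x (Suc n)) * real (cf_p x n) - real (cf_p x (Suc n)) * real (cf_q x n) = (-1) ^ n"
proof (induction n)
  case 0 then show ?case by simp
next
  case (Suc n)
  then show ?case by (simp add: algebra_simps)
qed

lemma cf_det_int: "int (cf_q x (Suc n)) * int (cf_p x n) - int (cf_p x (Suc n)) * int (cf_q x n) = (-1) ^ n"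
proof -
  have "real_of_int (int (cf_q x (Suc n)) * int (cf_p x n) - int (cf_p x (Suc n)) * int (cf_q x n))
      = real_of_int ((-1) ^ n)" using cf_det[of x n] by simp
  then show ?thesis by (simp only: of_int_eq_iff)
qed

lemma cf_coprime: "coprime (cf_q x (Suc n)) (cf_q x n)"
proof -
  have "coprime (int (cf_q x (Suc n))) (int (cf_q x n))"
  proof (rule coprimeI)
    fix c assume "c dvd int (cf_q x (Suc n))" "c dvd int (cf_q x n)"
    then have "c dvd int (cf_q x (Suc n)) * int (cf_p x n) - int (cf_p x (Suc n)) * int (cf_q x n)"
      by (intro dvd_diff dvd_mult2 dvd_mult) auto
    then have "c dvd (-1) ^ n" using cf_det_int[of x n] by simp
    then show "is_unit c" by (rule dvd_unit_imp_unit) (simp add: is_unit_power_iff)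
  qed
  then show ?thesis by simp
qed

lemma cf_q_growth:
  assumes "0 < x" "x < 1" "x \<notin> \<rat>"
  shows "n \<le> cf_q x (Suc n) \<and> Suc n \<le> cf_q x (Suc (Suc n))"
proof (induction n)
  case 0
  have "1 \<le> cf_a x (Suc 0)" using cf_a_rel(2)[OF assms] by blast
  then show ?case by simp
next
  case (Suc n)
  have a: "1 \<le> cf_a x (Suc (Suc n))" using cf_a_rel(2)[OF assms] by blast
  have 1: "cf_q x (Suc (Suc n)) \<le> cf_a x (Suc (Suc n)) * cf_q x (Suc (Suc n))" using a by simp
  have 2: "1 \<le> cf_q x (Suc n)" using Suc.IH by (cases n) auto
  have 3: "cf_q x (Suc (Suc (Suc n))) = cf_a x (Suc (Suc n)) * cf_q x (Suc (Suc n)) + cf_q x (Suc n)"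
    by (simp only: cf_q.simps)
  show ?case using 1 2 3 Suc.IH by linarith
qed

lemma cf_q_pos:
  assumes "0 < x" "x < 1" "x \<notin> \<rat>"
  shows "1 \<le> cf_q x (Suc m)"
proof (cases m)
  case 0 then show ?thesis by simp
next
  case (Suc k)
  have "Suc k \<le> cf_q x (Suc (Suc k))" using cf_q_growth[OF assms, of k] by blast
  then show ?thesis unfolding Suc by linarith
qed

lemma cf_Lam_abs:
  assumes "0 < x" "x < 1" "x \<notin> \<rat>"
  shows "\<bar>Lam x (Suc m)\<bar> = cc x (Suc m) / real (cf_q x (Suc m))"
    and "0 < cc x (Suc m)" and "cc x (Suc m) < 1"
proof -
  let ?r = "cf_rem x m" and ?Q = "real (cf_q x (Suc m))" and ?Q' = "real (cf_q x m)"
  let ?P = "real (cf_p x (Suc m))" and ?P' = "real (cf_p x m)"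
  have r: "0 < ?r" "?r < 1" using cf_rem_props[OF assms] by auto
  have Q: "1 \<le> ?Q" using cf_q_pos[OF assms, of m] by linarith
  have Q': "0 \<le> ?Q'" by simp
  let ?X = "?Q + ?r * ?Q'"
  have X: "0 < ?X" using r Q Q' by (smt (verit) mult_nonneg_nonneg)
  have inv: "x * ?X = ?P + ?r * ?P'" using cf_invariant[OF assms, of m] by simp
  have "Lam x (Suc m) * ?X = ?Q * (x * ?X) - ?P * ?X" by (simp add: Lam_def algebra_simps)
  also have "\<dots> = ?r * (?Q * ?P' - ?P * ?Q')" unfolding inv by (simp add: algebra_simps)
  also have "\<dots> = ?r * (-1)^m" using cf_det[of x m] by simp
  finally have "Lam x (Suc m) = ?r * (-1)^m / ?X" using X by (simp add: field_simps)
  then have L: "\<bar>Lam x (Suc m)\<bar> = ?r / ?X" using r X by (simp add: abs_mult abs_divide)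
  have ap: "alpha_plus x (Suc m) = 1 / ?r" by (simp add: alpha_plus_def)
  have am: "alpha_minus x (Suc m) = ?Q' / ?Q" by (simp add: alpha_minus_def)
  have c: "cc x (Suc m) = ?r * ?Q / ?X"
    unfolding cc_def ap am using r Q by (simp add: field_simps)
  show "\<bar>Lam x (Suc m)\<bar> = cc x (Suc m) / ?Q" unfolding L c using Q by simp
  show "0 < cc x (Suc m)" unfolding c using r Q X by simp
  have "?r * ?Q < 1 * ?Q" by (rule mult_strict_right_mono) (use r Q in auto)
  moreover have "0 \<le> ?r * ?Q'" using r by simp
  ultimately have "?r * ?Q < ?X" by linarith
  then show "cc x (Suc m) < 1" unfolding c using X by simp
qed

lemma ln_tail:
  fixes z :: real
  assumes z: "\<bar>z\<bar> \<le> 1/2"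
  shows "\<bar>ln (1 - z) + (\<Sum>j=1..N. z^j / real j)\<bar> \<le> 2 * \<bar>z\<bar>^(N+1)"
proof -
  define f where "f n = z^(Suc n) / real (Suc n)" for n
  have zl: "norm \<bar>z\<bar> < 1" using z by simp
  have fb: "norm (f n) \<le> \<bar>z\<bar>^n" for n
  proof -
    have "norm (f n) = \<bar>z\<bar>^(Suc n) / real (Suc n)" by (simp add: f_def abs_mult power_abs)
    also have "\<dots> \<le> \<bar>z\<bar>^(Suc n)" using divide_left_mono[of 1 "real (Suc n)" "\<bar>z\<bar>^(Suc n)"] by simp
    also have "\<dots> = \<bar>z\<bar> * \<bar>z\<bar>^n" by simp
    also have "\<dots> \<le> 1 * \<bar>z\<bar>^n" using z by (intro mult_right_mono) auto
    finally show ?thesis by simp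
  qed
  have sf: "summable f" by (rule summable_comparison_test'[OF summable_geometric[OF zl]]) (use fb in auto)
  have "ln (1 - z) = (\<Sum>n. (-1)^n * (1 / real (n + 1)) * ((1 - z) - 1)^(Suc n))"
    using z by (intro ln_series) auto
  also have "(\<lambda>n. (-1)^n * (1 / real (n + 1)) * ((1 - z) - 1)^(Suc n)) = (\<lambda>n. - f n)"
  proof
    fix n
    have e1: "((1 - z) - 1)^(Suc n) = (-1)^(Suc n) * z^(Suc n)"
      by (simp add: power_minus[symmetric])
    have e2: "(-1::real)^n * (-1)^(Suc n) = -1"
      by (simp add: power_add[symmetric] mult_2[symmetric])
    have "(-1)^n * (1 / real (n + 1)) * ((1 - z) - 1)^(Suc n)
        = ((-1)^n * (-1)^(Suc n)) * (z^(Suc n) / real (Suc n))" unfolding e1 by simp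
    then show "(-1)^n * (1 / real (n + 1)) * ((1 - z) - 1)^(Suc n) = - f n"
      unfolding e2 by (simp add: f_def)
  qed
  finally have l: "ln (1 - z) = - suminf f" using suminf_minus[OF sf] by simp
  have s: "(\<Sum>j=1..N. z^j / real j) = (\<Sum>i<N. f i)"
  proof -
    have "(\<Sum>j=1..N. z^j / real j) = (\<Sum>i<N. z^(Suc i) / real (Suc i))"
      by (rule sum.reindex_bij_witness[of _ Suc "\<lambda>j. j - 1"]) auto
    then show ?thesis by (simp add: f_def)
  qed
  have "ln (1 - z) + (\<Sum>j=1..N. z^j / real j) = - (\<Sum>n. f (n + N))"
    unfolding l s using suminf_split_initial_segment[OF sf, of N] by simp
  moreover have "norm (\<Sum>n. f (n + N)) \<le> (\<Sum>n. \<bar>z\<bar>^(N+1) * \<bar>z\<bar>^n)"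
  proof (rule norm_suminf_le)
    fix n
    have "norm (f (n + N)) = \<bar>z\<bar>^(Suc (n+N)) / real (Suc (n + N))" by (simp add: f_def abs_mult power_abs)
    also have "\<dots> \<le> \<bar>z\<bar>^(Suc (n+N))" using divide_left_mono[of 1 "real (Suc (n+N))" "\<bar>z\<bar>^(Suc (n+N))"] by simp
    finally show "norm (f (n + N)) \<le> \<bar>z\<bar>^(N+1) * \<bar>z\<bar>^n" by (simp add: power_add ac_simps)
  next
    show "summable (\<lambda>n. \<bar>z\<bar>^(N+1) * \<bar>z\<bar>^n)" using summable_geometric[OF zl] by (rule summable_mult)
  qed
  moreover have "(\<Sum>n. \<bar>z\<bar>^(N+1) * \<bar>z\<bar>^n) = \<bar>z\<bar>^(N+1) * (1 / (1 - \<bar>z\<bar>))"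
    using suminf_mult[OF summable_geometric[OF zl], of "\<bar>z\<bar>^(N+1)"] suminf_geometric[OF zl] by simp
  moreover have "\<bar>z\<bar>^(N+1) * (1 / (1 - \<bar>z\<bar>)) \<le> \<bar>z\<bar>^(N+1) * 2"
    using z by (intro mult_left_mono) (auto simp: field_simps)
  ultimately show ?thesis by (simp add: mult.commute)
qed

lemma sym_sets:
  fixes q :: nat
  assumes "1 \<le> q"
  defines "M \<equiv> (q - 1) div 2"
  shows "{1..q-1} = ({1..M} \<union> (\<lambda>t. q - t) ` {1..M}) \<union> (if even q then {q div 2} else {})"
    and "{1..M} \<inter> (\<lambda>t. q - t) ` {1..M} = {}"
    and "({1..M} \<union> (\<lambda>t. q - t) ` {1..M}) \<inter> (if even q then {q div 2} else {}) = {}"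
    and "inj_on (\<lambda>t. q - t) {1..M}"
proof -
  have img: "(\<lambda>t. q - t) ` {1..M} = {q - M..q-1}"
  proof
    show "(\<lambda>t. q - t) ` {1..M} \<subseteq> {q - M..q-1}" unfolding M_def by auto
    show "{q - M..q-1} \<subseteq> (\<lambda>t. q - t) ` {1..M}"
    proof
      fix s assume s: "s \<in> {q - M..q-1}"
      then have "s = q - (q - s)" "q - s \<in> {1..M}" unfolding M_def using assms by auto
      then show "s \<in> (\<lambda>t. q - t) ` {1..M}" by blast
    qed
  qed
  show "{1..q-1} = ({1..M} \<union> (\<lambda>t. q - t) ` {1..M}) \<union> (if even q then {q div 2} else {})"
    using assms by (subst img) (auto simp: M_def elim!: evenE oddE)
  show "{1..M} \<inter> (\<lambda>t. q - t) ` {1..M} = {}"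
    using assms by (subst img) (auto simp: M_def)
  show "({1..M} \<union> (\<lambda>t. q - t) ` {1..M}) \<inter> (if even q then {q div 2} else {}) = {}"
    using assms by (subst img) (auto simp: M_def elim!: evenE oddE)
  show "inj_on (\<lambda>t. q - t) {1..M}" unfolding M_def by (auto simp: inj_on_def)
qed

lemma sym_split_sum:
  fixes g :: "nat \<Rightarrow> real" and q :: nat
  assumes q: "1 \<le> q" and sym: "\<And>t. 0 < t \<Longrightarrow> t < q \<Longrightarrow> g (q - t) = g t"
  shows "(\<Sum>t=1..q-1. g t) = 2 * (\<Sum>t=1..(q-1) div 2. g t) + (if even q then g (q div 2) else 0)"
proof -
  let ?M = "(q - 1) div 2"
  note S = sym_sets[OF q]
  have r: "(\<Sum>t\<in>(\<lambda>t. q - t) ` {1..?M}. g t) = (\<Sum>t=1..?M. g t)"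
  proof -
    have "(\<Sum>t\<in>(\<lambda>t. q - t) ` {1..?M}. g t) = (\<Sum>t=1..?M. g (q - t))"
      using sum.reindex[OF S(4), of g] by simp
    also have "\<dots> = (\<Sum>t=1..?M. g t)" by (intro sum.cong) (auto intro!: sym)
    finally show ?thesis .
  qed
  have "(\<Sum>t=1..q-1. g t) = (\<Sum>t\<in>{1..?M} \<union> (\<lambda>t. q - t) ` {1..?M}. g t) + (\<Sum>t\<in>(if even q then {q div 2} else {}). g t)"
    by (subst S(1), rule sum.union_disjoint) (use S(3) in auto)
  also have "(\<Sum>t\<in>{1..?M} \<union> (\<lambda>t. q - t) ` {1..?M}. g t) = (\<Sum>t=1..?M. g t) + (\<Sum>t\<in>(\<lambda>t. q - t) ` {1..?M}. g t)"
    by (rule sum.union_disjoint) (use S(2) in auto)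
  finally show ?thesis unfolding r by auto
qed

lemma sym_split_prod:
  fixes g :: "nat \<Rightarrow> real" and q :: nat
  assumes q: "1 \<le> q" and sym: "\<And>t. 0 < t \<Longrightarrow> t < q \<Longrightarrow> g (q - t) = g t"
  shows "(\<Prod>t=1..q-1. g t) = (\<Prod>t=1..(q-1) div 2. g t)^2 * (if even q then g (q div 2) else 1)"
proof -
  let ?M = "(q - 1) div 2"
  note S = sym_sets[OF q]
  have r: "(\<Prod>t\<in>(\<lambda>t. q - t) ` {1..?M}. g t) = (\<Prod>t=1..?M. g t)"
  proof -
    have "(\<Prod>t\<in>(\<lambda>t. q - t) ` {1..?M}. g t) = (\<Prod>t=1..?M. g (q - t))"
      using prod.reindex[OF S(4), of g] by simp
    also have "\<dots> = (\<Prod>t=1..?M. g t)" by (intro prod.cong) (auto intro!: sym)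
    finally show ?thesis .
  qed
  have "(\<Prod>t=1..q-1. g t) = (\<Prod>t\<in>{1..?M} \<union> (\<lambda>t. q - t) ` {1..?M}. g t) * (\<Prod>t\<in>(if even q then {q div 2} else {}). g t)"
    by (subst S(1), rule prod.union_disjoint) (use S(3) in auto)
  also have "(\<Prod>t\<in>{1..?M} \<union> (\<lambda>t. q - t) ` {1..?M}. g t) = (\<Prod>t=1..?M. g t) * (\<Prod>t\<in>(\<lambda>t. q - t) ` {1..?M}. g t)"
    by (rule prod.union_disjoint) (use S(2) in auto)
  finally show ?thesis unfolding r by (auto simp: power2_eq_square)
qed

lemma prod_diff_le:
  fixes a b :: "nat \<Rightarrow> real"
  assumes "finite I" "\<And>i. i \<in> I \<Longrightarrow> 0 \<le> a i \<and> a i \<le> 1 \<and> 0 \<le> b i \<and> b i \<le> 1"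
  shows "\<bar>(\<Prod>i\<in>I. a i) - (\<Prod>i\<in>I. b i)\<bar> \<le> (\<Sum>i\<in>I. \<bar>a i - b i\<bar>)"
  using assms
proof (induction I rule: finite_induct)
  case empty then show ?case by simp
next
  case (insert j I)
  let ?A = "\<Prod>i\<in>I. a i" and ?B = "\<Prod>i\<in>I. b i"
  have A: "0 \<le> ?A" "?A \<le> 1" using insert by (auto intro: prod_nonneg prod_le_1)
  have B: "0 \<le> ?B" "?B \<le> 1" using insert by (auto intro: prod_nonneg prod_le_1)
  have j: "0 \<le> a j" "a j \<le> 1" "0 \<le> b j" "b j \<le> 1" using insert by auto
  have IH: "\<bar>?A - ?B\<bar> \<le> (\<Sum>i\<in>I. \<bar>a i - b i\<bar>)" using insert by auto
  have "a j * ?A - b j * ?B = a j * (?A - ?B) + (a j - b j) * ?B" by (simp add: algebra_simps)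
  then have "\<bar>a j * ?A - b j * ?B\<bar> \<le> \<bar>a j\<bar> * \<bar>?A - ?B\<bar> + \<bar>a j - b j\<bar> * \<bar>?B\<bar>"
    by (metis abs_mult abs_triangle_ineq)
  also have "\<dots> \<le> 1 * \<bar>?A - ?B\<bar> + \<bar>a j - b j\<bar> * 1"
    using j B by (intro add_mono mult_mono) auto
  finally show ?case using insert IH by simp
qed

lemma one_minus_prod_le:
  fixes a :: "nat \<Rightarrow> real"
  assumes "finite I" "\<And>i. i \<in> I \<Longrightarrow> 0 \<le> a i \<and> a i \<le> 1"
  shows "\<bar>1 - (\<Prod>i\<in>I. a i)\<bar> \<le> (\<Sum>i\<in>I. 1 - a i)"
proof -
  have "\<bar>(\<Prod>i\<in>I. a i) - (\<Prod>i\<in>I. 1)\<bar> \<le> (\<Sum>i\<in>I. \<bar>a i - 1\<bar>)"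
    using assms by (intro prod_diff_le) auto
  also have "\<dots> = (\<Sum>i\<in>I. 1 - a i)" using assms by (intro sum.cong) auto
  finally show ?thesis by (simp add: abs_minus_commute)
qed

lemma inv_sq_tail:
  assumes "1 \<le> k"
  shows "(\<Sum>t=k+1..m. 1 / real t ^ 2) \<le> 1 / real k"
proof -
  have "(\<Sum>t=k+1..m. 1 / real t ^ 2) \<le> 1 / real k - 1 / real (max k m)" 
  proof (induction m)
    case 0 then show ?case using assms by simp
  next
    case (Suc m)
    show ?case
    proof (cases "Suc m \<le> k")
      case True
      then have "{k+1..Suc m} = {}" by auto
      then show ?thesis using True by (simp add: max_def)
    next
      case False
      then have km: "k \<le> m" by simp
      have "(\<Sum>t=k+1..Suc m. 1 / real t ^ 2) = (\<Sum>t=k+1..m. 1 / real t ^ 2) + 1 / real (Suc m) ^ 2"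
        using False by (simp add: sum.cl_ivl_Suc)
      also have "\<dots> \<le> 1 / real k - 1 / real m + 1 / real (Suc m) ^ 2"
        using Suc km by (simp add: max_def)
      also have "1 / real (Suc m) ^ 2 \<le> 1 / real m - 1 / real (Suc m)"
      proof -
        have m: "1 \<le> real m" using km assms by linarith
        have "1 / real m - 1 / real (Suc m) = 1 / (real m * real (Suc m))" using m by (simp add: field_simps)
        also have "1 / real (Suc m) ^ 2 \<le> 1 / (real m * real (Suc m))"
          using m by (intro divide_left_mono) (auto simp: power2_eq_square)
        finally show ?thesis by simp
      qed
      finally show ?thesis using km by (simp add: max_def)
    qed
  qed
  also have "\<dots> \<le> 1 / real k" by simp
  finally show ?thesis .
qed

lemma ln_diff_le:
  fixes a b m :: real
  assumes "0 < m" "m \<le> a" "m \<le> b"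
  shows "\<bar>ln a - ln b\<bar> \<le> \<bar>a - b\<bar> / m"
proof -
  have ab: "ln a - ln b \<le> (a - b) / b" if "m \<le> a" "m \<le> b" for a b
  proof -
    have "ln (a / b) \<le> a / b - 1" using that assms by (intro ln_le_minus_one) auto
    then show ?thesis using that assms by (simp add: ln_div diff_divide_distrib)
  qed
  have 1: "ln a - ln b \<le> \<bar>a - b\<bar> / m"
  proof -
    have "(a - b) / b \<le> \<bar>a - b\<bar> / b" by (intro divide_right_mono) (use assms in auto)
    also have "\<dots> \<le> \<bar>a - b\<bar> / m" by (intro divide_left_mono) (use assms in auto)
    finally show ?thesis using ab[OF assms(2,3)] by linarith
  qed
  have 2: "ln b - ln a \<le> \<bar>a - b\<bar> / m"
  proof -
    have "(b - a) / a \<le> \<bar>a - b\<bar> / a" by (intro divide_right_mono) (use assms in auto)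
    also have "\<dots> \<le> \<bar>a - b\<bar> / m" by (intro divide_left_mono) (use assms in auto)
    finally show ?thesis using ab[OF assms(3,2)] by linarith
  qed
  show ?thesis using 1 2 by linarith
qed

lemma sq_le_pow2: "(n::nat)^2 \<le> 2^(n+1)"
proof (induction n rule: less_induct)
  case (less n)
  show ?case
  proof (cases "n \<le> 3")
    case True
    then have "n = 0 \<or> n = 1 \<or> n = 2 \<or> n = 3" by auto
    then show ?thesis by auto
  next
    case False
    then obtain k where k: "n = Suc k" "3 \<le> k" by (cases n) auto
    have "k^2 \<le> 2^(k+1)" using less k by simp
    moreover have "(Suc k)^2 \<le> 2 * k^2"
    proof -
      have "3 * k \<le> k * k" using mult_le_mono1[OF k(2), of k] by simp
      moreover have "(Suc k)^2 = k*k + 2*k + 1" "2 * k^2 = 2 * (k * k)" by (simp_all add: power2_eq_square)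
      ultimately show ?thesis using k by linarith
    qed
    ultimately show ?thesis using k by simp
  qed
qed

lemma tau_pow_bound:
  assumes "1 \<le> n"
  shows "real n / 2^n \<le> 2 / real n"
proof -
  have "real (n^2) \<le> real (2^(n+1))" using sq_le_pow2[of n] by linarith
  then have "real n * real n \<le> 2 * 2^n" by (simp add: power2_eq_square)
  then show ?thesis using assms by (simp add: field_simps)
qed

locale sud =
  fixes q p :: nat and c L :: real
  assumes q_ge: "100 \<le> q" and cop: "coprime q p" and c_pos: "0 < c" and c_lt1: "c < 1"
    and L_eq: "L = c / real q"
begin

definition X :: "nat \<Rightarrow> real" where "X t = frac (real t * real p / real q) - 1 / 2"
definition u :: "nat \<Rightarrow> real" where "u t = real t - c * X t"
definition w :: "nat \<Rightarrow> real" where "w t = pi * u t / real q"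
definition M :: nat where "M = (q - 1) div 2"

lemma qpos: "0 < real q" "1 \<le> q" using q_ge by auto

lemma X_bounds: "- 1/2 \<le> X t" "X t < 1/2" "\<bar>X t\<bar> \<le> 1/2"
proof -
  have "0 \<le> frac (real t * real p / real q)" "frac (real t * real p / real q) < 1"
    by (rule frac_ge_0, rule frac_lt_1)
  then show "- 1/2 \<le> X t" "X t < 1/2" "\<bar>X t\<bar> \<le> 1/2" unfolding X_def abs_le_iff by linarith+
qed

lemma X0: "X 0 = - 1/2" by (simp add: X_def)

lemma not_int:
  assumes "0 < t" "t < q"
  shows "real t * real p / real q \<notin> \<int>"
proof
  assume "real t * real p / real q \<in> \<int>"
  then obtain k where k: "real t * real p / real q = of_int k" by (auto elim: Ints_cases)
  then have "real (t * p) = of_int k * real q" using qpos by (simp add: field_simps)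
  then have "int (t * p) = k * int q" by (metis of_int_eq_iff of_int_mult of_int_of_nat_eq)
  then have "int q dvd int (t * p)" by simp
  then have "q dvd t * p" by (simp only: of_nat_dvd_iff)
  then have "q dvd t" using cop by (simp add: coprime_dvd_mult_left_iff)
  then show False using assms by (auto dest: nat_dvd_not_less)
qed

lemma X_sym:
  assumes "0 < t" "t < q"
  shows "X (q - t) = - X t"
proof -
  have "real (q - t) * real p / real q = real p - real t * real p / real q"
    using assms qpos by (simp add: of_nat_diff field_simps)
  then have "frac (real (q - t) * real p / real q) = frac (- (real t * real p / real q))"
    by (metis frac_add_of_int_left of_int_of_nat_eq uminus_add_conv_diff add.commute diff_conv_add_uminus)
  also have "\<dots> = 1 - frac (real t * real p / real q)" using not_int[OF assms] by (simp add: frac_neg)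
  finally show ?thesis unfolding X_def by simp
qed

lemma X_mid:
  assumes "even q"
  shows "X (q div 2) = 0"
proof -
  have "odd p"
  proof
    assume "even p"
    then have "2 dvd gcd q p" using assms by simp
    then show False using cop by simp
  qed
  then obtain k where k: "p = 2 * k + 1" by (auto elim: oddE)
  have "real (q div 2) * real p / real q = real p / 2" using assms qpos by (auto elim!: evenE)
  also have "\<dots> = of_int (int k) + 1/2" using k by simp
  finally have "frac (real (q div 2) * real p / real q) = frac (of_int (int k) + 1/2)" by simp
  also have "\<dots> = frac (1/2)" by (rule frac_add_of_int_left)
  also have "frac (1/2 :: real) = 1/2" by (simp add: frac_eq)
  finally show ?thesis unfolding X_def by simp
qed

lemma w_sym:
  assumes "0 < t" "t < q"
  shows "w (q - t) = pi - w t"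
  unfolding w_def u_def X_sym[OF assms] using assms qpos by (simp add: of_nat_diff field_simps)

lemma w_eq: "pi * (real t / real q - L * X t) = w t"
  unfolding w_def u_def L_eq using qpos by (simp add: field_simps)

lemma u_bounds: "real t - 1/2 \<le> u t" "u t \<le> real t + 1/2"
proof -
  have "\<bar>c * X t\<bar> \<le> 1 * (1/2)" unfolding abs_mult using c_pos c_lt1 X_bounds(3)[of t]
    by (intro mult_mono) auto
  then show "real t - 1/2 \<le> u t" "u t \<le> real t + 1/2" unfolding u_def by (auto simp: abs_le_iff)
qed

lemma w_pos: assumes "1 \<le> t" "t \<le> q - 1" shows "0 < w t" "w t < pi"
proof -
  have "1/2 \<le> u t" "u t \<le> real q - 1/2" using u_bounds[of t] assms qpos by (auto simp: of_nat_diff)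
  then have "0 < u t / real q" "u t / real q < 1" using qpos by (auto simp: field_simps)
  moreover have "w t = pi * (u t / real q)" unfolding w_def by simp
  moreover have "pi * (u t / real q) < pi * 1" using \<open>u t / real q < 1\<close> by (intro mult_strict_left_mono) auto
  moreover have "0 < pi * (u t / real q)" using \<open>0 < u t / real q\<close> by (intro mult_pos_pos) auto
  ultimately show "0 < w t" "w t < pi" by (simp_all only:)
qed

lemma M_le: "2 * M \<le> q - 1" "q \<le> 2 * M + 2" unfolding M_def by auto

lemma w_half: assumes "1 \<le> t" "t \<le> M"
  shows "pi * real t / (2 * real q) \<le> w t" "w t \<le> pi / 2"
proof -
  have "real t / 2 \<le> u t" using u_bounds[of t] assms by linarith
  then show "pi * real t / (2 * real q) \<le> w t" unfolding w_def using qpos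
    by (simp add: field_simps mult_left_mono)
  have "2 * real t \<le> real q - 1" using M_le assms qpos by linarith
  then have "u t \<le> real q / 2" using u_bounds[of t] by linarith
  then show "w t \<le> pi / 2" unfolding w_def using qpos by (simp add: field_simps mult_left_mono)
qed

end

context sud begin

lemma pi_sq: "pi^2 < 16"
proof -
  have "pi^2 < 4^2" by (rule power_strict_mono) (use pi_less_4 in auto)
  then show ?thesis by simp
qed

definition xx :: "nat \<Rightarrow> real" where "xx t = pi * real t / real q"
definition ee :: "nat \<Rightarrow> real" where "ee t = pi * c * X t / real q"
definition R :: "nat \<Rightarrow> real" where "R t = sin (w t) / sin (xx t)"

lemma w_xx_ee: "w t = xx t - ee t"
  unfolding w_def u_def xx_def ee_def using qpos by (simp add: field_simps)

lemma ee_bound: "\<bar>ee t\<bar> \<le> pi / (2 * real q)"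
proof -
  have "\<bar>c * X t\<bar> \<le> 1 * (1/2)" unfolding abs_mult using c_pos c_lt1 X_bounds(3)[of t]
    by (intro mult_mono) auto
  then have "\<bar>ee t\<bar> = pi * \<bar>c * X t\<bar> / real q" unfolding ee_def using qpos by (simp add: abs_mult)
  also have "\<dots> \<le> pi * (1/2) / real q" using \<open>\<bar>c * X t\<bar> \<le> 1 * (1/2)\<close> qpos
    by (intro divide_right_mono mult_left_mono) auto
  finally show ?thesis by simp
qed

lemma xx_props:
  assumes "1 \<le> t" "t \<le> M"
  shows "0 < xx t" "xx t \<le> pi / 2" "xx t / 3 \<le> sin (xx t)" "0 < sin (xx t)"
    "0 \<le> cos (xx t)" "cos (xx t) \<le> 1" "pi * real t / (3 * real q) \<le> sin (xx t)"
proof -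
  show "0 < xx t" unfolding xx_def using assms qpos by simp
  have "2 * real t \<le> real q" using M_le assms qpos by linarith
  then show "xx t \<le> pi / 2" unfolding xx_def using qpos by (simp add: field_simps mult_left_mono)
  then show "xx t / 3 \<le> sin (xx t)" using sin_ge_third' \<open>0 < xx t\<close> by simp
  show "0 < sin (xx t)" using sin_pos_half \<open>0 < xx t\<close> \<open>xx t \<le> pi / 2\<close> by simp
  show "0 \<le> cos (xx t)" using cos_ge_zero \<open>0 < xx t\<close> \<open>xx t \<le> pi / 2\<close> by simp
  show "cos (xx t) \<le> 1" by simp
  show "pi * real t / (3 * real q) \<le> sin (xx t)" using \<open>xx t / 3 \<le> sin (xx t)\<close> unfolding xx_def by simp
qed

lemma R_eq:
  assumes "1 \<le> t" "t \<le> M"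
  shows "R t = cos (ee t) - sin (ee t) * (cos (xx t) / sin (xx t))"
  unfolding R_def w_xx_ee sin_diff using xx_props[OF assms] by (simp add: field_simps)

lemma cot_bound:
  assumes "1 \<le> t" "t \<le> M"
  shows "\<bar>cos (xx t) / sin (xx t)\<bar> \<le> 3 * real q / (pi * real t)"
proof -
  note P = xx_props[OF assms]
  have "\<bar>cos (xx t) / sin (xx t)\<bar> = cos (xx t) / sin (xx t)" using P by simp
  also have "\<dots> \<le> 1 / sin (xx t)" using P by (intro divide_right_mono) auto
  also have "\<dots> \<le> 1 / (pi * real t / (3 * real q))" using P assms qpos
    by (intro divide_left_mono) auto
  also have "\<dots> = 3 * real q / (pi * real t)" by simp
  finally show ?thesis .
qed

lemma cube_term:
  assumes "1 \<le> t" "t \<le> M"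
  shows "\<bar>sin (ee t) - ee t\<bar> * \<bar>cos (xx t) / sin (xx t)\<bar> \<le> pi^2 / (16 * real q^2)"
proof -
  have e: "\<bar>ee t\<bar> \<le> pi / (2 * real q)" by (rule ee_bound)
  have "\<bar>sin (ee t) - ee t\<bar> \<le> \<bar>ee t\<bar>^3 / 6" by (rule sin_cube_bound)
  also have "\<dots> \<le> (pi / (2 * real q))^3 / 6" using e by (intro divide_right_mono power_mono) auto
  finally have a: "\<bar>sin (ee t) - ee t\<bar> \<le> (pi / (2 * real q))^3 / 6" .
  have b: "\<bar>cos (xx t) / sin (xx t)\<bar> \<le> 3 * real q / pi"
  proof -
    have "3 * real q / (pi * real t) \<le> 3 * real q / (pi * 1)" using assms qpos
      by (intro divide_left_mono mult_left_mono) auto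
    then show ?thesis using cot_bound[OF assms] by simp
  qed
  have "\<bar>sin (ee t) - ee t\<bar> * \<bar>cos (xx t) / sin (xx t)\<bar> \<le> (pi / (2 * real q))^3 / 6 * (3 * real q / pi)"
    using a b by (intro mult_mono) auto
  also have "\<dots> = pi^2 / (16 * real q^2)" using qpos by (simp add: field_simps power3_eq_cube power2_eq_square)
  finally show ?thesis .
qed

lemma cos_term: "\<bar>cos (ee t) - 1\<bar> \<le> pi^2 / (8 * real q^2)"
proof -
  have "\<bar>cos (ee t) - 1\<bar> \<le> (ee t)^2 / 2" using one_minus_cos_bound[of "ee t"] by auto
  also have "(ee t)^2 = \<bar>ee t\<bar>^2" by simp
  also have "\<dots> / 2 \<le> (pi / (2 * real q))^2 / 2"
    using ee_bound[of t] by (intro divide_right_mono power_mono) auto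
  also have "\<dots> = pi^2 / (8 * real q^2)" by (simp add: power_divide power_mult_distrib)
  finally show ?thesis .
qed

end

lemma tri3: "\<bar>(A::real) - B - C\<bar> \<le> \<bar>A\<bar> + \<bar>B\<bar> + \<bar>C\<bar>" by linarith

context sud begin

lemma e1_bound:
  assumes t: "1 \<le> t" "t \<le> M" and N: "1 \<le> N"
  shows "\<bar>ln (R t) + ee t * (cos (xx t) / sin (xx t)) + (\<Sum>j=2..N. (1 / real j) * (c * X t / real t)^j)\<bar>
         \<le> 9 * pi^2 * real t / real q^2 + 2 * \<bar>c * X t / real t\<bar>^(N+1)"
proof -
  note P = xx_props[OF t]
  define k where "k = cos (xx t) / sin (xx t)"
  define z where "z = c * X t / real t"
  have tpos: "1 \<le> real t" using t by simp
  have z_eq: "z = ee t / xx t" unfolding z_def ee_def xx_def using qpos tpos by (simp add: field_simps)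
  have cx: "\<bar>c * X t\<bar> \<le> 1/2"
  proof -
    have "\<bar>c * X t\<bar> \<le> 1 * (1/2)" unfolding abs_mult using c_pos c_lt1 X_bounds(3)[of t]
      by (intro mult_mono) auto
    then show ?thesis by simp
  qed
  have zb: "\<bar>z\<bar> \<le> 1/2"
  proof -
    have "\<bar>z\<bar> = \<bar>c * X t\<bar> / real t" unfolding z_def using tpos by simp
    also have "\<dots> \<le> (1/2) / 1" using cx tpos by (intro frac_le) auto
    finally show ?thesis by simp
  qed
  have kinv: "\<bar>k - 1 / xx t\<bar> \<le> 2 * xx t" unfolding k_def using cot_vs_inv P by simp
  have ek: "\<bar>ee t\<bar> * \<bar>k - 1 / xx t\<bar> \<le> pi^2 * real t / real q^2"
  proof -
    have "\<bar>ee t\<bar> * \<bar>k - 1 / xx t\<bar> \<le> (pi / (2 * real q)) * (2 * xx t)"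
      using ee_bound kinv by (intro mult_mono) auto
    also have "\<dots> = pi^2 * real t / real q^2" unfolding xx_def using qpos by (simp add: field_simps power2_eq_square)
    finally show ?thesis .
  qed
  have D1eq: "R t - (1 - z) = (cos (ee t) - 1) - (sin (ee t) - ee t) * k - ee t * (k - 1 / xx t)"
    unfolding R_eq[OF t] z_eq k_def using P by (simp add: field_simps)
  have q2: "pi^2 / (8 * real q^2) + pi^2 / (16 * real q^2) \<le> pi^2 * real t / real q^2"
  proof -
    have "pi^2 / (8 * real q^2) + pi^2 / (16 * real q^2) \<le> pi^2 * 1 / real q^2"
      using qpos by (simp add: field_simps)
    also have "\<dots> \<le> pi^2 * real t / real q^2" using tpos qpos by (intro divide_right_mono mult_left_mono) auto
    finally show ?thesis .
  qed
  have D1: "\<bar>R t - (1 - z)\<bar> \<le> 2 * pi^2 * real t / real q^2"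
  proof -
    have "\<bar>R t - (1 - z)\<bar> \<le> \<bar>cos (ee t) - 1\<bar> + \<bar>sin (ee t) - ee t\<bar> * \<bar>k\<bar> + \<bar>ee t\<bar> * \<bar>k - 1 / xx t\<bar>"
      unfolding D1eq abs_mult[symmetric] by (rule tri3)
    also have "\<dots> \<le> pi^2 / (8 * real q^2) + pi^2 / (16 * real q^2) + pi^2 * real t / real q^2"
      using cos_term[of t] cube_term[OF t] ek unfolding k_def by (intro add_mono) auto
    finally show ?thesis using q2 by simp
  qed
  have small: "2 * pi^2 * real t / real q^2 \<le> 1/4"
  proof -
    have "2 * real t \<le> real q" using M_le t qpos by linarith
    then have "2 * pi^2 * real t / real q^2 \<le> pi^2 * real q / real q^2"
      using qpos by (intro divide_right_mono) (auto simp: mult_left_mono)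
    also have "\<dots> = pi^2 / real q" using qpos by (simp add: power2_eq_square)
    also have "\<dots> \<le> 16 / 100" using pi_sq q_ge qpos by (intro frac_le) auto
    finally show ?thesis by simp
  qed
  have Rlow: "1/4 \<le> R t" using D1 small zb by (auto simp: abs_le_iff)
  have zlow: "1/4 \<le> 1 - z" using zb by (auto simp: abs_le_iff)
  have L1: "\<bar>ln (R t) - ln (1 - z)\<bar> \<le> 8 * pi^2 * real t / real q^2"
  proof -
    have "\<bar>ln (R t) - ln (1 - z)\<bar> \<le> \<bar>R t - (1 - z)\<bar> / (1/4)" using Rlow zlow by (intro ln_diff_le) auto
    then show ?thesis using D1 by simp
  qed
  have L2: "\<bar>ee t * k - z\<bar> \<le> pi^2 * real t / real q^2"
  proof -
    have "ee t * k - z = ee t * (k - 1 / xx t)" unfolding z_eq by (simp add: field_simps)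
    then show ?thesis using ek by (simp add: abs_mult)
  qed
  have L3: "\<bar>ln (1 - z) + (\<Sum>j=1..N. z^j / real j)\<bar> \<le> 2 * \<bar>z\<bar>^(N+1)" using ln_tail zb by blast
  have split: "(\<Sum>j=1..N. z^j / real j) = z + (\<Sum>j=2..N. (1 / real j) * z^j)"
    using N by (simp add: sum.atLeast_Suc_atMost numeral_2_eq_2)
  have "ln (R t) + ee t * k + (\<Sum>j=2..N. (1 / real j) * z^j)
      = (ln (R t) - ln (1 - z)) + (ee t * k - z) + (ln (1 - z) + (\<Sum>j=1..N. z^j / real j))"
    unfolding split by simp
  then have "\<bar>ln (R t) + ee t * k + (\<Sum>j=2..N. (1 / real j) * z^j)\<bar>
      \<le> 8 * pi^2 * real t / real q^2 + pi^2 * real t / real q^2 + 2 * \<bar>z\<bar>^(N+1)"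
    using L1 L2 L3 by (smt (verit) abs_triangle_ineq)
  moreover have "8 * pi^2 * real t / real q^2 + pi^2 * real t / real q^2 = 9 * pi^2 * real t / real q^2"
    by (simp add: field_simps)
  ultimately have "\<bar>ln (R t) + ee t * k + (\<Sum>j=2..N. (1 / real j) * z^j)\<bar>
      \<le> 9 * pi^2 * real t / real q^2 + 2 * \<bar>z\<bar>^(N+1)" by linarith
  then show ?thesis unfolding k_def z_def .
qed

lemma e2_bound:
  assumes t: "4 \<le> t" "t \<le> M"
  shows "\<bar>ln (R t) + ee t * (cos (xx t) / sin (xx t))\<bar> \<le> 8 / real t^2 + 3 / real q^2"
proof -
  have t1: "1 \<le> t" using t by simp
  note P = xx_props[OF t1 t(2)]
  define k where "k = cos (xx t) / sin (xx t)"
  define y where "y = R t - 1"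
  have tpos: "4 \<le> real t" using t by simp
  have tq: "real t \<le> real q" using M_le t qpos by linarith
  have sk: "\<bar>sin (ee t) * k\<bar> \<le> 3 / (2 * real t)"
  proof -
    have "\<bar>sin (ee t) * k\<bar> \<le> \<bar>ee t\<bar> * \<bar>k\<bar>" unfolding abs_mult
      using abs_sin_x_le_abs_x by (intro mult_right_mono) auto
    also have "\<dots> \<le> (pi / (2 * real q)) * (3 * real q / (pi * real t))"
      using ee_bound cot_bound[OF t1 t(2)] unfolding k_def by (intro mult_mono) auto
    also have "\<dots> = 3 / (2 * real t)" using qpos tpos by (simp add: field_simps)
    finally show ?thesis .
  qed
  have cq: "pi^2 / (8 * real q^2) \<le> 2 / real q^2" using pi_sq qpos by (simp add: field_simps)
  have cq2: "2 / real q^2 \<le> 1 / (2 * real t)"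
  proof -
    have "2 / real q^2 \<le> 2 / (4 * real q)" using qpos q_ge
      by (intro divide_left_mono) (auto simp: power2_eq_square mult_right_mono)
    also have "\<dots> \<le> 1 / (2 * real t)" using tq tpos by (simp add: field_simps)
    finally show ?thesis .
  qed
  have yeq: "y = (cos (ee t) - 1) - sin (ee t) * k" unfolding y_def R_eq[OF t1 t(2)] k_def by simp
  have yb: "\<bar>y\<bar> \<le> 2 / real t"
  proof -
    have "\<bar>y\<bar> \<le> \<bar>cos (ee t) - 1\<bar> + \<bar>sin (ee t) * k\<bar>" unfolding yeq by (rule abs_triangle_ineq4)
    also have "\<dots> \<le> 1 / (2 * real t) + 3 / (2 * real t)" using cos_term[of t] cq cq2 sk by (intro add_mono) auto
    finally show ?thesis by simp
  qed
  have "2 / real t \<le> 1/2" using tpos by (simp add: field_simps)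
  then have yh: "\<bar>y\<bar> \<le> 1/2" using yb by linarith
  have l1: "\<bar>ln (1 + y) - y\<bar> \<le> 8 / real t^2"
  proof -
    have "\<bar>ln (1 + y) - y\<bar> \<le> 2 * y^2" using abs_ln_one_plus_x_minus_x_bound yh by blast
    also have "y^2 = \<bar>y\<bar>^2" by simp
    also have "2 * \<bar>y\<bar>^2 \<le> 2 * (2 / real t)^2" using yb by (intro mult_left_mono power_mono) auto
    also have "\<dots> = 8 / real t^2" by (simp add: power_divide)
    finally show ?thesis .
  qed
  have l2: "\<bar>y + ee t * k\<bar> \<le> 3 / real q^2"
  proof -
    have "y + ee t * k = (cos (ee t) - 1) - (sin (ee t) - ee t) * k" unfolding yeq by (simp add: algebra_simps)
    then have "\<bar>y + ee t * k\<bar> \<le> \<bar>cos (ee t) - 1\<bar> + \<bar>sin (ee t) - ee t\<bar> * \<bar>k\<bar>"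
      by (metis abs_mult abs_triangle_ineq4)
    also have "\<dots> \<le> pi^2 / (8 * real q^2) + pi^2 / (16 * real q^2)"
      using cos_term[of t] cube_term[OF t1 t(2)] unfolding k_def by (intro add_mono) auto
    also have "\<dots> \<le> 3 / real q^2" using pi_sq qpos by (simp add: field_simps)
    finally show ?thesis .
  qed
  have "ln (R t) = ln (1 + y)" unfolding y_def by simp
  then have "\<bar>ln (R t) + ee t * k\<bar> \<le> \<bar>ln (1 + y) - y\<bar> + \<bar>y + ee t * k\<bar>" by simp
  then show ?thesis using l1 l2 unfolding k_def by linarith
qed

end

context sud begin

lemma B_sum_bound:
  assumes tau: "3 \<le> \<tau>" "\<tau> \<le> M"
  shows "\<bar>(\<Sum>t=1..M. ln (R t)) + (\<Sum>t=1..M. ee t * (cos (xx t) / sin (xx t)))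
          + (\<Sum>t=1..\<tau>. \<Sum>j=2..\<tau>. (1 / real j) * (c * X t / real t)^j)\<bar>
         \<le> 9 * pi^2 * real \<tau>^2 / real q^2 + real \<tau> / 2^\<tau> + 8 / real \<tau> + 3 / real q"
proof -
  define E where "E t = ln (R t) + ee t * (cos (xx t) / sin (xx t))" for t
  define F where "F t = (\<Sum>j=2..\<tau>. (1 / real j) * (c * X t / real t)^j)" for t
  have U: "{1..M} = {1..\<tau>} \<union> {Suc \<tau>..M}" using tau by auto
  have D: "{1..\<tau>} \<inter> {Suc \<tau>..M} = {}" by auto
  have sE: "(\<Sum>t=1..M. E t) = (\<Sum>t=1..\<tau>. E t) + (\<Sum>t=Suc \<tau>..M. E t)"
    unfolding U by (rule sum.union_disjoint) (use D in auto)
  have eq: "(\<Sum>t=1..M. ln (R t)) + (\<Sum>t=1..M. ee t * (cos (xx t) / sin (xx t))) + (\<Sum>t=1..\<tau>. F t)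
      = (\<Sum>t=1..\<tau>. E t + F t) + (\<Sum>t=Suc \<tau>..M. E t)"
    using sE unfolding E_def by (simp add: sum.distrib)
  have b1: "\<bar>E t + F t\<bar> \<le> 9 * pi^2 * real \<tau> / real q^2 + 2 * (1/2)^(\<tau>+1)" if t: "t \<in> {1..\<tau>}" for t
  proof -
    have t1: "1 \<le> t" "t \<le> M" using t tau by auto
    have "\<bar>E t + F t\<bar> \<le> 9 * pi^2 * real t / real q^2 + 2 * \<bar>c * X t / real t\<bar>^(\<tau>+1)"
      unfolding E_def F_def using e1_bound[OF t1, of \<tau>] tau by simp
    also have "9 * pi^2 * real t / real q^2 \<le> 9 * pi^2 * real \<tau> / real q^2"
      using t by (intro divide_right_mono mult_left_mono) auto
    also have "\<bar>c * X t / real t\<bar> \<le> 1/2"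
    proof -
      have "\<bar>c * X t\<bar> \<le> 1 * (1/2)" unfolding abs_mult using c_pos c_lt1 X_bounds(3)[of t]
        by (intro mult_mono) auto
      then have "\<bar>c * X t\<bar> / real t \<le> (1/2) / 1" using t1 by (intro frac_le) auto
      then show ?thesis using t1 by simp
    qed
    then have "\<bar>c * X t / real t\<bar>^(\<tau>+1) \<le> (1/2)^(\<tau>+1)" by (intro power_mono) auto
    finally show ?thesis by simp
  qed
  have b2: "\<bar>E t\<bar> \<le> 8 * (1 / real t^2) + 3 / real q^2" if t: "t \<in> {Suc \<tau>..M}" for t
    unfolding E_def using e2_bound[of t] t tau by auto
  have "\<bar>(\<Sum>t=1..\<tau>. E t + F t)\<bar> \<le> (\<Sum>t=1..\<tau>. 9 * pi^2 * real \<tau> / real q^2 + 2 * (1/2)^(\<tau>+1))"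
    by (rule order.trans[OF sum_abs sum_mono]) (use b1 in auto)
  also have "\<dots> = real \<tau> * (9 * pi^2 * real \<tau> / real q^2) + real \<tau> * (2 * (1/2)^(\<tau>+1))" by (simp add: algebra_simps)
  also have "\<dots> = 9 * pi^2 * real \<tau>^2 / real q^2 + real \<tau> / 2^\<tau>"
    by (simp add: power2_eq_square power_divide field_simps)
  finally have S1: "\<bar>(\<Sum>t=1..\<tau>. E t + F t)\<bar> \<le> 9 * pi^2 * real \<tau>^2 / real q^2 + real \<tau> / 2^\<tau>" .
  have "\<bar>(\<Sum>t=Suc \<tau>..M. E t)\<bar> \<le> (\<Sum>t=Suc \<tau>..M. 8 * (1 / real t^2) + 3 / real q^2)"
    by (rule order.trans[OF sum_abs sum_mono]) (use b2 in auto)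
  also have "\<dots> = 8 * (\<Sum>t=\<tau>+1..M. 1 / real t^2) + real (M - \<tau>) * (3 / real q^2)"
    by (simp add: sum.distrib sum_distrib_left)
  also have "\<dots> \<le> 8 * (1 / real \<tau>) + real q * (3 / real q^2)"
  proof -
    have "(\<Sum>t=\<tau>+1..M. 1 / real t^2) \<le> 1 / real \<tau>" using inv_sq_tail tau by simp
    moreover have "real (M - \<tau>) * (3 / real q^2) \<le> real q * (3 / real q^2)"
      using M_le by (intro mult_right_mono) auto
    ultimately show ?thesis by linarith
  qed
  also have "\<dots> = 8 / real \<tau> + 3 / real q" using qpos by (simp add: power2_eq_square)
  finally have S2: "\<bar>(\<Sum>t=Suc \<tau>..M. E t)\<bar> \<le> 8 / real \<tau> + 3 / real q" .
  show ?thesis unfolding F_def[symmetric] eq using S1 S2 by (smt (verit) abs_triangle_ineq)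
qed

end

lemma sum_by_parts:
  fixes a g :: "nat \<Rightarrow> real"
  shows "(\<Sum>t=1..m. a t * g t) = (\<Sum>s=1..m. a s) * g m + (\<Sum>t=1..m-1. (\<Sum>s=1..t. a s) * (g t - g (t+1)))"
proof (induction m)
  case 0 then show ?case by simp
next
  case (Suc m)
  have h: "(\<Sum>t=1..m. (\<Sum>s=1..t. a s) * (g t - g (t+1))) = (\<Sum>t=1..m-1. (\<Sum>s=1..t. a s) * (g t - g (t+1))) + (\<Sum>s=1..m. a s) * (g m - g (m+1))"
  proof (cases m)
    case 0 then show ?thesis by simp
  next
    case (Suc k) then show ?thesis by (simp add: sum.cl_ivl_Suc)
  qed
  show ?case using Suc h by (simp add: sum.cl_ivl_Suc algebra_simps)
qed

context sud begin

definition kk :: "nat \<Rightarrow> real" where "kk t = cos (xx t) / sin (xx t)"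

lemma kk_diff:
  assumes "1 \<le> t" "t + 1 \<le> M"
  shows "kk t - kk (t+1) = sin (pi / real q) / (sin (xx t) * sin (xx (t+1)))"
proof -
  have s1: "sin (xx t) \<noteq> 0" using xx_props(4)[of t] assms by simp
  have s2: "sin (xx (t+1)) \<noteq> 0" using xx_props(4)[of "t+1"] assms by simp
  have "xx (t+1) - xx t = (pi * real (t+1) - pi * real t) / real q" unfolding xx_def by (simp add: diff_divide_distrib)
  also have "\<dots> = pi / real q" by (simp add: algebra_simps)
  finally have "xx (t+1) - xx t = pi / real q" .
  then have "sin (pi / real q) = sin (xx (t+1)) * cos (xx t) - cos (xx (t+1)) * sin (xx t)"
    by (metis sin_diff)
  then show ?thesis unfolding kk_def using s1 s2 by (simp add: field_simps)
qed

lemma M_ge: "2 \<le> M" unfolding M_def using q_ge by auto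

lemma kk_M: "0 \<le> kk M" "kk M \<le> 8 / real q"
proof -
  note P = xx_props[of M, OF _ order_refl]
  have M1: "1 \<le> M" using M_ge by simp
  show "0 \<le> kk M" unfolding kk_def using P M1 by simp
  have xM: "pi / 2 - pi / real q \<le> xx M"
  proof -
    have "real q - 2 \<le> 2 * real M" using M_le qpos by linarith
    then have "pi * (real q - 2) / 2 \<le> pi * real M" by (simp add: mult_left_mono)
    then have "(pi * (real q - 2) / 2) / real q \<le> pi * real M / real q" using qpos by (intro divide_right_mono) auto
    moreover have "pi / 2 - pi / real q = (pi * (real q - 2) / 2) / real q" using qpos by (simp add: field_simps)
    ultimately show ?thesis unfolding xx_def by simp
  qed
  have "cos (xx M) = sin (pi / 2 - xx M)" by (simp add: sin_cos_eq)
  also have "\<dots> \<le> pi / 2 - xx M" using P M1 by (intro sin_x_le_x) auto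
  also have "\<dots> \<le> pi / real q" using xM by simp
  finally have c: "cos (xx M) \<le> pi / real q" .
  have "3 * real q \<le> 8 * real M" using M_le q_ge by linarith
  then have "3/8 \<le> real M / real q" using qpos by (simp add: field_simps)
  then have "pi * (3/8) \<le> pi * (real M / real q)" by (intro mult_left_mono) auto
  then have "pi * (3/8) \<le> xx M" unfolding xx_def by simp
  then have "pi / 8 \<le> xx M / 3" by simp
  also have "\<dots> \<le> sin (xx M)" using P M1 by simp
  finally have s: "pi / 8 \<le> sin (xx M)" .
  have "kk M \<le> (pi / real q) / (pi / 8)" unfolding kk_def using c s P M1
    by (intro frac_le) auto
  then show "kk M \<le> 8 / real q" by simp
qed

definition T1v :: real where
  "T1v = - 2 * pi^2 * c / real q^2 * (\<Sum>t=1..M-1. (\<Sum>s=1..t. X s) / (sin (pi * real t / real q) * sin (pi * real (t+1) / real q)))"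

lemma T1_bound:
  "\<bar>T1v + 2 * (\<Sum>t=1..M. ee t * (cos (xx t) / sin (xx t)))\<bar> \<le> 160 / real q"
proof -
  define a where "a = pi / real q"
  define S where "S = (\<Sum>t=1..M. X t * kk t)"
  define DM where "DM = (\<Sum>s=1..M. X s)"
  have a: "0 < a" "a \<le> pi / 2" unfolding a_def using qpos q_ge by (auto simp: field_simps)
  have sa: "a / 3 \<le> sin a" "0 < sin a" using sin_ge_third' sin_pos_half a by auto
  have sbp: "S = DM * kk M + sin a * (\<Sum>t=1..M-1. (\<Sum>s=1..t. X s) / (sin (pi * real t / real q) * sin (pi * real (t+1) / real q)))"
  proof -
    have "S = DM * kk M + (\<Sum>t=1..M-1. (\<Sum>s=1..t. X s) * (kk t - kk (t+1)))"
      unfolding S_def DM_def by (rule sum_by_parts)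
    also have "(\<Sum>t=1..M-1. (\<Sum>s=1..t. X s) * (kk t - kk (t+1)))
        = (\<Sum>t=1..M-1. sin a * ((\<Sum>s=1..t. X s) / (sin (pi * real t / real q) * sin (pi * real (t+1) / real q))))"
    proof (rule sum.cong)
      fix t assume t: "t \<in> {1..M-1}"
      then show "(\<Sum>s=1..t. X s) * (kk t - kk (t+1)) = sin a * ((\<Sum>s=1..t. X s) / (sin (pi * real t / real q) * sin (pi * real (t+1) / real q)))"
        using kk_diff[of t] unfolding a_def xx_def by auto
    qed simp
    finally show ?thesis by (simp add: sum_distrib_left)
  qed
  have lin: "(\<Sum>t=1..M. ee t * (cos (xx t) / sin (xx t))) = (pi * c / real q) * S"
    unfolding S_def sum_distrib_left kk_def ee_def by (intro sum.cong) auto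
  have sig: "(\<Sum>t=1..M-1. (\<Sum>s=1..t. X s) / (sin (pi * real t / real q) * sin (pi * real (t+1) / real q)))
      = (S - DM * kk M) / sin a" using sbp sa by (simp add: field_simps)
  have T1e: "T1v = - 2 * (pi * c / real q) * (a / sin a) * (S - DM * kk M)"
    unfolding T1v_def sig using sa a qpos unfolding a_def by (simp add: field_simps power2_eq_square)
  have key: "T1v + 2 * (\<Sum>t=1..M. ee t * (cos (xx t) / sin (xx t)))
        = - 2 * (pi * c / real q) * ((a / sin a - 1) * S - (a / sin a) * (DM * kk M))"
  proof -
    define b where "b = a / sin a"
    define K where "K = pi * c / real q"
    have "- 2 * K * b * (S - DM * kk M) + 2 * (K * S) = - 2 * K * ((b - 1) * S - b * (DM * kk M))"
      by (simp add: algebra_simps)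
    then show ?thesis unfolding T1e lin b_def K_def .
  qed
  have r1: "\<bar>a / sin a - 1\<bar> \<le> a^2 / 2"
  proof -
    have "\<bar>a / sin a - 1\<bar> = \<bar>a - sin a\<bar> / sin a" using sa by (simp add: field_simps)
    also have "\<dots> \<le> (a^3 / 6) / (a / 3)" using sin_cube_bound[of a] sa a
      by (intro frac_le) (auto simp: abs_minus_commute)
    also have "\<dots> = a^2 / 2" using a by (simp add: field_simps power2_eq_square power3_eq_cube)
    finally show ?thesis .
  qed
  have r2: "a / sin a \<le> 3" using sa a by (simp add: field_simps)
  have Sb: "\<bar>S\<bar> \<le> real q^2"
  proof -
    have tb: "\<bar>X t * kk t\<bar> \<le> real q" if t: "t \<in> {1..M}" for t
    proof -
      have "\<bar>X t * kk t\<bar> \<le> (1/2) * (3 * real q / (pi * real t))"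
        unfolding abs_mult kk_def using X_bounds(3)[of t] cot_bound[of t] t by (intro mult_mono) auto
      also have "\<dots> \<le> (1/2) * (3 * real q / (2 * 1))"
        using t qpos pi_ge_two by (intro mult_left_mono divide_left_mono mult_mono) auto
      also have "\<dots> \<le> real q" using qpos by simp
      finally show ?thesis .
    qed
    have "\<bar>S\<bar> \<le> (\<Sum>t=1..M. real q)" unfolding S_def
      by (rule order.trans[OF sum_abs sum_mono]) (use tb in auto)
    also have "\<dots> = real M * real q" by simp
    also have "\<dots> \<le> real q * real q" using M_le by (intro mult_right_mono) auto
    finally show ?thesis by (simp add: power2_eq_square)
  qed
  have DMb: "\<bar>DM\<bar> \<le> real q / 2"
  proof -
    have "\<bar>DM\<bar> \<le> (\<Sum>s=1..M. 1/2)" unfolding DM_def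
      by (rule order.trans[OF sum_abs sum_mono]) (use X_bounds(3) in auto)
    also have "\<dots> = real M / 2" by simp
    also have "\<dots> \<le> real q / 2" using M_le by simp
    finally show ?thesis .
  qed
  have p1: "\<bar>(a / sin a - 1) * S\<bar> \<le> 8"
  proof -
    have "\<bar>(a / sin a - 1) * S\<bar> \<le> (a^2 / 2) * real q^2" unfolding abs_mult using r1 Sb by (intro mult_mono) auto
    also have "\<dots> = pi^2 / 2" unfolding a_def using qpos by (simp add: power_divide)
    also have "\<dots> \<le> 8" using pi_sq by simp
    finally show ?thesis .
  qed
  have p2: "\<bar>(a / sin a) * (DM * kk M)\<bar> \<le> 12"
  proof -
    have "\<bar>(a / sin a) * (DM * kk M)\<bar> \<le> 3 * ((real q / 2) * (8 / real q))"
      unfolding abs_mult using r2 DMb kk_M sa a by (intro mult_mono) auto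
    also have "\<dots> = 12" using qpos by simp
    finally show ?thesis .
  qed
  have "\<bar>T1v + 2 * (\<Sum>t=1..M. ee t * (cos (xx t) / sin (xx t)))\<bar>
      = 2 * (pi * c / real q) * \<bar>(a / sin a - 1) * S - (a / sin a) * (DM * kk M)\<bar>"
    unfolding key using c_pos qpos by (simp add: abs_mult)
  also have "\<dots> \<le> 2 * (pi * 1 / real q) * 20"
  proof -
    have "\<bar>(a / sin a - 1) * S - (a / sin a) * (DM * kk M)\<bar> \<le> 20"
      using abs_triangle_ineq4[of "(a / sin a - 1) * S" "(a / sin a) * (DM * kk M)"] add_mono[OF p1 p2] by simp
    then show ?thesis using c_pos c_lt1 qpos by (intro mult_mono divide_right_mono) auto
  qed
  also have "\<dots> \<le> 160 / real q" using pi_less_4 qpos by (simp add: field_simps)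
  finally show ?thesis .
qed

end

lemma sinc_bounds:
  fixes x :: real assumes "0 < x" "x \<le> pi/2"
  shows "1 - x^2/6 \<le> sin x / x" "sin x / x \<le> 1" "1/3 \<le> sin x / x"
proof -
  have "\<bar>sin x - x\<bar> \<le> x^3/6" using sin_cube_bound[of x] assms by simp
  then have "x - x^3/6 \<le> sin x" by linarith
  then have "(x - x^3/6) / x \<le> sin x / x" using assms by (intro divide_right_mono) auto
  moreover have "(x - x^3/6) / x = 1 - x^2/6" using assms by (simp add: field_simps power2_eq_square power3_eq_cube)
  ultimately show "1 - x^2/6 \<le> sin x / x" by simp
  show "sin x / x \<le> 1" using sin_x_le_x[of x] assms by simp
  show "1/3 \<le> sin x / x" using sin_ge_third'[of x] assms by (simp add: field_simps)
qed

lemma sin_ratio_bound: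
  fixes d w :: real assumes "0 < d" "d \<le> w" "w \<le> pi/2"
  shows "\<bar>(sin d)^2 / (sin w)^2 - d^2 / w^2\<bar> \<le> 3 * d^2"
proof -
  define A where "A = sin d / d"
  define B where "B = sin w / w"
  have w0: "0 < w" using assms by simp
  have A: "1 - d^2/6 \<le> A" "A \<le> 1" using sinc_bounds[of d] assms unfolding A_def by auto
  have B: "1 - w^2/6 \<le> B" "B \<le> 1" "1/3 \<le> B" using sinc_bounds[of w] assms w0 unfolding B_def by auto
  have dw: "d^2 \<le> w^2" using assms by (intro power_mono) auto
  have A': "1 - w^2/6 \<le> A" using A(1) dw by linarith
  have AB: "\<bar>B - A\<bar> \<le> w^2/6" unfolding abs_le_iff using A' A(2) B(1) B(2) by (intro conjI; linarith)
  have AB2: "\<bar>B^2 - A^2\<bar> \<le> w^2/3"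
  proof -
    have A0: "0 \<le> A" unfolding A_def using sin_ge_zero[of d] assms by simp
    have "B^2 - A^2 = (B - A) * (B + A)" by (simp add: power2_eq_square algebra_simps)
    then have "\<bar>B^2 - A^2\<bar> = \<bar>B - A\<bar> * \<bar>B + A\<bar>" by (simp add: abs_mult)
    also have "\<bar>B + A\<bar> = B + A" using A0 B by simp
    finally have "\<bar>B^2 - A^2\<bar> = \<bar>B - A\<bar> * (B + A)" .
    also have "\<dots> \<le> (w^2/6) * 2" using AB A0 A B by (intro mult_mono) auto
    finally show ?thesis by simp
  qed
  have sd: "sin d = A * d" "sin w = B * w" unfolding A_def B_def using assms w0 by auto
  have "(sin d)^2 / (sin w)^2 - d^2 / w^2 = (d^2 / w^2) * ((A^2 - B^2) / B^2)"
    unfolding sd using B w0 assms by (simp add: field_simps power2_eq_square)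
  then have "\<bar>(sin d)^2 / (sin w)^2 - d^2 / w^2\<bar> = (d^2 / w^2) * (\<bar>B^2 - A^2\<bar> / B^2)"
    using B by (simp add: abs_mult abs_divide abs_minus_commute)
  also have "\<dots> \<le> (d^2 / w^2) * ((w^2/3) / (1/9))"
  proof (intro mult_left_mono frac_le)
    show "1/9 \<le> B^2" using B power_mono[of "1/3" B 2] by (simp add: power2_eq_square)
  qed (use AB2 in auto)
  also have "\<dots> = 3 * d^2" using w0 by (simp add: field_simps power2_eq_square)
  finally show ?thesis .
qed

lemma sin_ratio_small:
  fixes d w :: real assumes "0 < d" "d \<le> w" "w \<le> pi/2"
  shows "(sin d)^2 / (sin w)^2 \<le> 9 * d^2 / w^2" "(sin d)^2 / (sin w)^2 \<le> 1" "0 \<le> (sin d)^2 / (sin w)^2"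
proof -
  have w0: "0 < w" using assms by simp
  have sw: "w / 3 \<le> sin w" "0 < sin w" using sin_ge_third'[of w] sin_pos_half[of w] assms w0 by auto
  have sd: "0 \<le> sin d" "sin d \<le> d" using sin_x_le_x[of d] sin_ge_zero[of d] assms by auto
  have "(sin d)^2 / (sin w)^2 \<le> d^2 / (w/3)^2"
    using sd sw w0 by (intro frac_le power_mono) auto
  also have "\<dots> = 9 * d^2 / w^2" by (simp add: power_divide)
  finally show "(sin d)^2 / (sin w)^2 \<le> 9 * d^2 / w^2" .
  have "sin d \<le> sin w" using assms w0 by (subst sin_mono_le_eq) auto
  then have "(sin d)^2 \<le> (sin w)^2" using sd by (intro power_mono) auto
  then show "(sin d)^2 / (sin w)^2 \<le> 1" using sw by simp
  show "0 \<le> (sin d)^2 / (sin w)^2" by simp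
qed

context sud begin

definition sS :: "nat \<Rightarrow> real" where "sS t = 2 * sin (pi * (real t / real q - L * X t))"
definition dd :: real where "dd = pi * c / (2 * real q)"

lemma sS_w: "sS t = 2 * sin (w t)" unfolding sS_def w_eq ..

lemma w0: "w 0 = dd" unfolding w_def u_def dd_def X0 by simp

lemma dd_props: "0 < dd" "dd^2 \<le> 4 / real q^2"
proof -
  show "0 < dd" unfolding dd_def using c_pos qpos by simp
  have "dd \<le> pi / (2 * real q)" unfolding dd_def using c_pos c_lt1 qpos
    by (intro divide_right_mono) (auto simp: mult_left_le)
  then have "dd^2 \<le> (pi / (2 * real q))^2" using \<open>0 < dd\<close> by (intro power_mono) auto
  also have "\<dots> = pi^2 / (4 * real q^2)" by (simp add: power_divide power_mult_distrib)
  also have "\<dots> \<le> 16 / (4 * real q^2)" using pi_sq qpos by (intro divide_right_mono) auto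
  finally show "dd^2 \<le> 4 / real q^2" by simp
qed

definition ff :: "nat \<Rightarrow> real" where "ff t = 1 - (sS 0)^2 / (sS t)^2"

lemma ff_eq: "ff t = 1 - (sin dd)^2 / (sin (w t))^2"
  unfolding ff_def sS_w w0 by (simp add: power_mult_distrib)

lemma ff_sym: "0 < t \<Longrightarrow> t < q \<Longrightarrow> ff (q - t) = ff t"
  unfolding ff_eq using w_sym by simp

lemma dd_le_w: assumes "1 \<le> t" "t \<le> M" shows "dd \<le> w t"
proof -
  have "dd \<le> pi * real t / (2 * real q)" unfolding dd_def using c_pos c_lt1 qpos assms
    by (intro divide_right_mono mult_left_mono) auto
  then show ?thesis using w_half(1)[OF assms] by linarith
qed

lemma ff_props:
  assumes t: "1 \<le> t" "t \<le> M"
  shows "0 \<le> ff t" "ff t \<le> 1" "1 - ff t \<le> 9 / real t^2"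
proof -
  have d: "0 < dd" "dd \<le> w t" "w t \<le> pi/2" using dd_props dd_le_w[OF t] w_half[OF t] by auto
  note S = sin_ratio_small[OF d]
  show "0 \<le> ff t" "ff t \<le> 1" unfolding ff_eq using S by auto
  have "dd / w t \<le> 1 / real t"
  proof -
    have "dd \<le> pi * real t / (2 * real q) * (1 / real t)" unfolding dd_def using c_pos c_lt1 qpos t
      by (simp add: field_simps)
    also have "\<dots> \<le> w t * (1 / real t)" using w_half(1)[OF t] t by (intro mult_right_mono) auto
    finally show ?thesis using d by (simp add: field_simps)
  qed
  then have "(dd / w t)^2 \<le> (1 / real t)^2" using d by (intro power_mono) auto
  then have "9 * dd^2 / (w t)^2 \<le> 9 / real t^2" by (simp add: power_divide)
  then show "1 - ff t \<le> 9 / real t^2" unfolding ff_eq using S(1) by simp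
qed

definition gg :: "nat \<Rightarrow> real" where "gg t = 1 - 1 / (4 * (real t / c - X t)^2)"

lemma gg_eq: assumes "1 \<le> t" shows "gg t = 1 - dd^2 / (w t)^2"
proof -
  have u: "0 < u t" using u_bounds(1)[of t] assms by simp
  have "real t / c - X t = u t / c" unfolding u_def using c_pos by (simp add: field_simps)
  then have "1 / (4 * (real t / c - X t)^2) = c^2 / (4 * (u t)^2)" using c_pos u by (simp add: power_divide)
  also have "\<dots> = dd^2 / (w t)^2" unfolding dd_def w_def using u qpos by (simp add: power_divide power_mult_distrib field_simps)
  finally show ?thesis unfolding gg_def by simp
qed

lemma gg_props:
  assumes t: "1 \<le> t" "t \<le> M"
  shows "0 \<le> gg t" "gg t \<le> 1" "\<bar>ff t - gg t\<bar> \<le> 3 * dd^2"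
proof -
  have d: "0 < dd" "dd \<le> w t" "w t \<le> pi/2" using dd_props dd_le_w[OF t] w_half[OF t] by auto
  have "dd^2 \<le> (w t)^2" using d by (intro power_mono) auto
  then have "dd^2 / (w t)^2 \<le> 1" using d by simp
  then show "0 \<le> gg t" "gg t \<le> 1" unfolding gg_eq[OF t(1)] by auto
  show "\<bar>ff t - gg t\<bar> \<le> 3 * dd^2" unfolding ff_eq gg_eq[OF t(1)]
    using sin_ratio_bound[OF d] by (simp add: abs_minus_commute)
qed

lemma C_bound:
  assumes k: "1 \<le> \<kappa>" "\<kappa> \<le> M"
  shows "\<bar>(\<Prod>t=1..q-1. sqrt (1 - (sS 0)^2 / (sS t)^2)) - (\<Prod>t=1..\<kappa>. 1 - 1 / (4 * (real t / c - X t)^2))\<bar>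
         \<le> 12 * real \<kappa> / real q^2 + 9 / real \<kappa> + 4 / real q^2"
proof -
  define m where "m = (if even q then sqrt (ff (q div 2)) else 1)"
  have m: "0 \<le> m" "m \<le> 1" "1 - m \<le> 4 / real q^2"
  proof -
    have "0 \<le> m \<and> m \<le> 1 \<and> 1 - m \<le> 4 / real q^2"
    proof (cases "even q")
      case True
      have wm: "w (q div 2) = pi / 2" unfolding w_def u_def X_mid[OF True] using True qpos
        by (auto elim!: evenE simp: field_simps)
      have f: "ff (q div 2) = 1 - (sin dd)^2" unfolding ff_eq wm by simp
      have s: "(sin dd)^2 \<le> dd^2" using abs_sin_x_le_abs_x[of dd] by (metis abs_ge_zero power2_abs power_mono)
      have s1: "(sin dd)^2 \<le> 1" by (simp add: abs_square_le_1)
      have fp: "0 \<le> ff (q div 2)" "ff (q div 2) \<le> 1" using f s1 by auto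
      have sq1: "sqrt (ff (q div 2)) \<le> 1" using fp by simp
      have "ff (q div 2) = sqrt (ff (q div 2)) * sqrt (ff (q div 2))" using fp by simp
      also have "\<dots> \<le> sqrt (ff (q div 2)) * 1" using sq1 fp by (intro mult_left_mono) auto
      finally have "ff (q div 2) \<le> sqrt (ff (q div 2))" by simp
      then show ?thesis unfolding m_def using True sq1 f s s1 fp dd_props(2) by auto
    next
      case False then show ?thesis unfolding m_def by simp
    qed
    then show "0 \<le> m" "m \<le> 1" "1 - m \<le> 4 / real q^2" by auto
  qed
  have C: "(\<Prod>t=1..q-1. sqrt (1 - (sS 0)^2 / (sS t)^2)) = (\<Prod>t=1..M. ff t) * m"
  proof -
    have "(\<Prod>t=1..q-1. sqrt (1 - (sS 0)^2 / (sS t)^2)) = (\<Prod>t=1..q-1. sqrt (ff t))"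
      unfolding ff_def ..
    also have "\<dots> = (\<Prod>t=1..M. sqrt (ff t))^2 * m"
      unfolding m_def M_def by (rule sym_split_prod[OF qpos(2)]) (simp add: ff_sym)
    also have "(\<Prod>t=1..M. sqrt (ff t))^2 = (\<Prod>t=1..M. ff t)"
      unfolding prod_power_distrib using ff_props(1) by (intro prod.cong) auto
    finally show ?thesis .
  qed
  have G: "(\<Prod>t=1..\<kappa>. 1 - 1 / (4 * (real t / c - X t)^2)) = (\<Prod>t=1..\<kappa>. gg t)"
    unfolding gg_def ..
  define P1 where "P1 = (\<Prod>t=1..\<kappa>. ff t)"
  define P2 where "P2 = (\<Prod>t=Suc \<kappa>..M. ff t)"
  define GG where "GG = (\<Prod>t=1..\<kappa>. gg t)"
  have U: "{1..M} = {1..\<kappa>} \<union> {Suc \<kappa>..M}" using k by auto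
  have P: "(\<Prod>t=1..M. ff t) = P1 * P2" unfolding P1_def P2_def U by (rule prod.union_disjoint) auto
  have P1b: "0 \<le> P1" "P1 \<le> 1" unfolding P1_def using ff_props k by (auto intro!: prod_nonneg prod_le_1)
  have P2b: "0 \<le> P2" "P2 \<le> 1" unfolding P2_def using ff_props k by (auto intro!: prod_nonneg prod_le_1)
  have Pb: "0 \<le> P1 * P2" "P1 * P2 \<le> 1" using P1b P2b by (auto simp: mult_le_one)
  have e1: "\<bar>P1 - GG\<bar> \<le> 3 * real \<kappa> * dd^2"
  proof -
    have "\<bar>P1 - GG\<bar> \<le> (\<Sum>t=1..\<kappa>. \<bar>ff t - gg t\<bar>)" unfolding P1_def GG_def
      using ff_props gg_props k by (intro prod_diff_le) auto
    also have "\<dots> \<le> (\<Sum>t=1..\<kappa>. 3 * dd^2)" using gg_props k by (intro sum_mono) auto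
    finally show ?thesis by simp
  qed
  have e2: "\<bar>1 - P2\<bar> \<le> 9 / real \<kappa>"
  proof -
    have "\<bar>1 - P2\<bar> \<le> (\<Sum>t=Suc \<kappa>..M. 1 - ff t)" unfolding P2_def
      using ff_props k by (intro one_minus_prod_le) auto
    also have "\<dots> \<le> (\<Sum>t=Suc \<kappa>..M. 9 * (1 / real t^2))" 
      by (rule sum_mono) (use ff_props(3) k in force)
    also have "\<dots> = 9 * (\<Sum>t=Suc \<kappa>..M. 1 / real t^2)" by (simp add: sum_distrib_left)
    also have "\<dots> \<le> 9 * (1 / real \<kappa>)" using inv_sq_tail[OF k(1), of M] by (intro mult_left_mono) auto
    finally show ?thesis by simp
  qed
  have "\<bar>P1 * P2 * m - GG\<bar> \<le> \<bar>P1 * P2\<bar> * \<bar>m - 1\<bar> + \<bar>P1\<bar> * \<bar>P2 - 1\<bar> + \<bar>P1 - GG\<bar>"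
  proof -
    have "P1 * P2 * m - GG = P1 * P2 * (m - 1) + P1 * (P2 - 1) + (P1 - GG)" by (simp add: algebra_simps)
    moreover have "\<bar>P1 * P2 * (m - 1) + P1 * (P2 - 1) + (P1 - GG)\<bar> \<le> \<bar>P1 * P2 * (m - 1)\<bar> + \<bar>P1 * (P2 - 1)\<bar> + \<bar>P1 - GG\<bar>"
      by linarith
    ultimately show ?thesis by (simp only: abs_mult)
  qed
  also have "\<dots> \<le> 1 * (4 / real q^2) + 1 * (9 / real \<kappa>) + 3 * real \<kappa> * dd^2"
    using Pb P1b m e1 e2 by (intro add_mono mult_mono) (auto simp: abs_minus_commute)
  also have "3 * real \<kappa> * dd^2 \<le> 3 * real \<kappa> * (4 / real q^2)" using dd_props by (intro mult_left_mono) auto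
  finally show ?thesis unfolding C G P GG_def[symmetric] by simp
qed

lemma A_bound:
  assumes "\<bar>\<Lambda>\<bar> = L"
  shows "\<bar>\<bar>2 * real q * sin (pi * \<Lambda>)\<bar> / (2 * pi * c) - 1\<bar> \<le> 3 * \<Lambda>^2"
proof -
  define a where "a = pi * L"
  have L: "0 < L" "L \<le> 1/100" unfolding L_eq using c_pos c_lt1 q_ge by (auto simp: field_simps)
  have a: "0 < a" "a \<le> pi" unfolding a_def using L by (auto simp: mult_left_le)
  have s: "\<bar>sin (pi * \<Lambda>)\<bar> = sin a"
  proof (cases "0 \<le> \<Lambda>")
    case True then show ?thesis unfolding a_def using assms a sin_ge_zero[of a] by (simp add: a_def)
  next
    case False
    then have "\<Lambda> = - L" using assms by auto
    then show ?thesis unfolding a_def using a sin_ge_zero[of a] by (simp add: a_def)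
  qed
  have q: "real q = c / L" unfolding L_eq using c_pos qpos by simp
  have e: "\<bar>2 * real q * sin (pi * \<Lambda>)\<bar> / (2 * pi * c) = sin a / a"
    unfolding abs_mult s q a_def using c_pos L by (simp add: field_simps)
  have "\<bar>sin a / a - 1\<bar> = \<bar>sin a - a\<bar> / a" using a by (simp add: field_simps)
  also have "\<dots> \<le> (a^3 / 6) / a" using sin_cube_bound[of a] a by (intro divide_right_mono) auto
  also have "\<dots> = pi^2 / 6 * L^2" unfolding a_def using L by (simp add: field_simps power2_eq_square power3_eq_cube)
  also have "\<dots> \<le> 3 * L^2" using pi_sq by (intro mult_right_mono) auto
  finally show ?thesis unfolding e using assms by (metis power2_abs)
qed

end

lemma tri2: "\<bar>2 * (x::real) - y\<bar> \<le> 2 * \<bar>x\<bar> + \<bar>y\<bar>" by linarith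

context sud begin

lemma R_pos: assumes "1 \<le> t" "t \<le> q - 1" shows "0 < R t"
proof -
  have "0 < sin (w t)" using w_pos[OF assms] by (intro sin_gt_zero) auto
  moreover have "0 < sin (xx t)" unfolding xx_def using assms qpos
    by (intro sin_gt_zero) (auto simp: field_simps)
  ultimately show ?thesis unfolding R_def by simp
qed

lemma R_sym: "0 < t \<Longrightarrow> t < q \<Longrightarrow> R (q - t) = R t"
proof -
  assume a: "0 < t" "t < q"
  have "xx (q - t) = pi - xx t" unfolding xx_def using a qpos by (simp add: of_nat_diff field_simps)
  then show ?thesis unfolding R_def w_sym[OF a] by simp
qed

lemma R_mid: "even q \<Longrightarrow> R (q div 2) = 1"
proof -
  assume e: "even q"
  have "w (q div 2) = pi / 2" unfolding w_def u_def X_mid[OF e] using e qpos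
    by (auto elim!: evenE simp: field_simps)
  moreover have "xx (q div 2) = pi / 2" unfolding xx_def using e qpos by (auto elim!: evenE simp: field_simps)
  ultimately show ?thesis unfolding R_def by (simp only:) simp
qed

lemma B_bound:
  assumes tau: "3 \<le> \<tau>" "\<tau> \<le> M"
  shows "\<bar>ln \<bar>\<Prod>t=1..q-1. sS t / (2 * sin (pi * real t / real q))\<bar>
           - (T1v - 2 * (\<Sum>t=1..\<tau>. \<Sum>j=2..\<tau>. (1 / real j) * (c * X t / real t)^j))\<bar>
         \<le> 18 * pi^2 * real \<tau>^2 / real q^2 + 2 * (real \<tau> / 2^\<tau>) + 16 / real \<tau> + 166 / real q"
proof -
  have rat: "sS t / (2 * sin (pi * real t / real q)) = R t" for t
    unfolding sS_w R_def xx_def by simp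
  have pos: "\<forall>t\<in>{1..q-1}. 0 < R t" using R_pos by auto
  have "\<bar>\<Prod>t=1..q-1. sS t / (2 * sin (pi * real t / real q))\<bar> = (\<Prod>t=1..q-1. R t)"
    unfolding rat using pos by (intro abs_of_nonneg prod_nonneg) (auto simp: less_imp_le)
  moreover have "ln (\<Prod>t=1..q-1. R t) = (\<Sum>t=1..q-1. ln (R t))"
    by (rule ln_prod) (use pos in force)+
  ultimately have lnB: "ln \<bar>\<Prod>t=1..q-1. sS t / (2 * sin (pi * real t / real q))\<bar> = (\<Sum>t=1..q-1. ln (R t))"
    by simp
  also have "\<dots> = 2 * (\<Sum>t=1..M. ln (R t)) + (if even q then ln (R (q div 2)) else 0)"
    unfolding M_def by (rule sym_split_sum[OF qpos(2)]) (simp add: R_sym)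
  also have "\<dots> = 2 * (\<Sum>t=1..M. ln (R t))" using R_mid by simp
  finally have lnB2: "ln \<bar>\<Prod>t=1..q-1. sS t / (2 * sin (pi * real t / real q))\<bar> = 2 * (\<Sum>t=1..M. ln (R t))" .
  define Lk where "Lk = (\<Sum>t=1..M. ee t * (cos (xx t) / sin (xx t)))"
  define T2 where "T2 = (\<Sum>t=1..\<tau>. \<Sum>j=2..\<tau>. (1 / real j) * (c * X t / real t)^j)"
  have eq: "2 * (\<Sum>t=1..M. ln (R t)) - (T1v - 2 * T2) = 2 * ((\<Sum>t=1..M. ln (R t)) + Lk + T2) - (T1v + 2 * Lk)"
    by (simp add: algebra_simps)
  have b1: "\<bar>(\<Sum>t=1..M. ln (R t)) + Lk + T2\<bar> \<le> 9 * pi^2 * real \<tau>^2 / real q^2 + real \<tau> / 2^\<tau> + 8 / real \<tau> + 3 / real q"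
    unfolding Lk_def T2_def by (rule B_sum_bound[OF tau])
  have b2: "\<bar>T1v + 2 * Lk\<bar> \<le> 160 / real q" unfolding Lk_def by (rule T1_bound)
  have "\<bar>2 * ((\<Sum>t=1..M. ln (R t)) + Lk + T2) - (T1v + 2 * Lk)\<bar>
        \<le> 2 * \<bar>(\<Sum>t=1..M. ln (R t)) + Lk + T2\<bar> + \<bar>T1v + 2 * Lk\<bar>" by (rule tri2)
  also have "\<dots> \<le> 2 * (9 * pi^2 * real \<tau>^2 / real q^2 + real \<tau> / 2^\<tau> + 8 / real \<tau> + 3 / real q) + 160 / real q"
    by (rule add_mono[OF mult_left_mono[OF b1] b2]) simp
  also have "\<dots> = 18 * pi^2 * real \<tau>^2 / real q^2 + 2 * (real \<tau> / 2^\<tau>) + 16 / real \<tau> + 166 / real q"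
    by (simp add: field_simps)
  finally have X: "\<bar>2 * ((\<Sum>t=1..M. ln (R t)) + Lk + T2) - (T1v + 2 * Lk)\<bar>
     \<le> 18 * pi^2 * real \<tau>^2 / real q^2 + 2 * (real \<tau> / 2^\<tau>) + 16 / real \<tau> + 166 / real q" .
  have "\<bar>2 * (\<Sum>t=1..M. ln (R t)) - (T1v - 2 * T2)\<bar>
     \<le> 18 * pi^2 * real \<tau>^2 / real q^2 + 2 * (real \<tau> / 2^\<tau>) + 16 / real \<tau> + 166 / real q"
    unfolding eq by (rule X)
  then show ?thesis unfolding lnB2 T2_def .
qed

end

lemma per_n:
  fixes \<alpha> :: real and n \<tau> \<kappa> :: nat
  assumes a: "0 < \<alpha>" "\<alpha> < 1" "\<alpha> \<notin> \<rat>" and n: "1 \<le> n" and q: "100 \<le> cf_q \<alpha> n"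
  shows "\<bar>A_n \<alpha> n / (2 * pi * cc \<alpha> n) - 1\<bar> \<le> 3 * (Lam \<alpha> n)\<^sup>2"
    and "3 \<le> \<tau> \<Longrightarrow> \<tau> \<le> M_n \<alpha> n \<Longrightarrow>
         \<bar>ln (B_n \<alpha> n)
           - (- 2 * pi\<^sup>2 * cc \<alpha> n / (real (cf_q \<alpha> n))\<^sup>2
                * (\<Sum>t = 1..M_n \<alpha> n - 1. Dsum t (alpha_minus \<alpha> n)
                     / (sin (pi * real t / real (cf_q \<alpha> n))
                        * sin (pi * real (t + 1) / real (cf_q \<alpha> n))))
              - 2 * (\<Sum>t = 1..\<tau>. \<Sum>j = 2..\<tau>.
                       (1 / real j) * (cc \<alpha> n * xi \<alpha> n t / real t) ^ j))\<bar>
         \<le> 18 * pi^2 * real \<tau>^2 / real (cf_q \<alpha> n)^2 + 2 * (real \<tau> / 2^\<tau>) + 16 / real \<tau> + 166 / real (cf_q \<alpha> n)"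
    and "1 \<le> \<kappa> \<Longrightarrow> \<kappa> \<le> M_n \<alpha> n \<Longrightarrow>
         \<bar>C_n \<alpha> n - (\<Prod>t = 1..\<kappa>. 1 - 1 / (4 * (real t / cc \<alpha> n - xi \<alpha> n t)\<^sup>2))\<bar>
         \<le> 12 * real \<kappa> / real (cf_q \<alpha> n)^2 + 9 / real \<kappa> + 4 / real (cf_q \<alpha> n)^2"
proof -
  obtain m where m: "n = Suc m" using n by (cases n) auto
  have Lc: "\<bar>Lam \<alpha> n\<bar> = cc \<alpha> n / real (cf_q \<alpha> n)" "0 < cc \<alpha> n" "cc \<alpha> n < 1"
    using cf_Lam_abs[OF a, of m] unfolding m by auto
  have cp: "coprime (cf_q \<alpha> n) (cf_q \<alpha> (n - 1))" using cf_coprime[of \<alpha> m] unfolding m by simp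
  interpret S: sud "cf_q \<alpha> n" "cf_q \<alpha> (n - 1)" "cc \<alpha> n" "\<bar>Lam \<alpha> n\<bar>"
    by unfold_locales (use q cp Lc in auto)
  have xiX: "xi \<alpha> n t = S.X t" for t unfolding xi_def S.X_def ..
  have sX: "s_nt \<alpha> n t = S.sS t" for t unfolding s_nt_def S.sS_def xiX ..
  have MM: "M_n \<alpha> n = S.M" unfolding M_n_def S.M_def ..
  show "\<bar>A_n \<alpha> n / (2 * pi * cc \<alpha> n) - 1\<bar> \<le> 3 * (Lam \<alpha> n)\<^sup>2"
    unfolding A_n_def by (rule S.A_bound) simp
  show "\<bar>C_n \<alpha> n - (\<Prod>t = 1..\<kappa>. 1 - 1 / (4 * (real t / cc \<alpha> n - xi \<alpha> n t)\<^sup>2))\<bar>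
         \<le> 12 * real \<kappa> / real (cf_q \<alpha> n)^2 + 9 / real \<kappa> + 4 / real (cf_q \<alpha> n)^2"
    if "1 \<le> \<kappa>" "\<kappa> \<le> M_n \<alpha> n"
    unfolding C_n_def sX xiX using S.C_bound[of \<kappa>] that MM by simp
  assume t: "3 \<le> \<tau>" "\<tau> \<le> M_n \<alpha> n"
  have D: "Dsum t (alpha_minus \<alpha> n) = (\<Sum>s=1..t. S.X s)" for t
    unfolding Dsum_def S.X_def alpha_minus_def by (intro sum.cong) (auto simp: mult.commute)
  have T1: "- 2 * pi\<^sup>2 * cc \<alpha> n / (real (cf_q \<alpha> n))\<^sup>2
                * (\<Sum>t = 1..M_n \<alpha> n - 1. Dsum t (alpha_minus \<alpha> n)
                     / (sin (pi * real t / real (cf_q \<alpha> n))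
                        * sin (pi * real (t + 1) / real (cf_q \<alpha> n)))) = S.T1v"
    unfolding S.T1v_def D MM ..
  show "\<bar>ln (B_n \<alpha> n)
           - (- 2 * pi\<^sup>2 * cc \<alpha> n / (real (cf_q \<alpha> n))\<^sup>2
                * (\<Sum>t = 1..M_n \<alpha> n - 1. Dsum t (alpha_minus \<alpha> n)
                     / (sin (pi * real t / real (cf_q \<alpha> n))
                        * sin (pi * real (t + 1) / real (cf_q \<alpha> n))))
              - 2 * (\<Sum>t = 1..\<tau>. \<Sum>j = 2..\<tau>.
                       (1 / real j) * (cc \<alpha> n * xi \<alpha> n t / real t) ^ j))\<bar>
         \<le> 18 * pi^2 * real \<tau>^2 / real (cf_q \<alpha> n)^2 + 2 * (real \<tau> / 2^\<tau>) + 16 / real \<tau> + 166 / real (cf_q \<alpha> n)"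
    unfolding T1 B_n_def sX xiX using S.B_bound[of \<tau>] t MM by simp
qed

lemma strict_mono_on_ge:
  fixes f :: "nat \<Rightarrow> nat"
  assumes "strict_mono_on {N..} f"
  shows "k \<le> f (N + k)"
proof (induction k)
  case 0 then show ?case by simp
next
  case (Suc k)
  have "f (N + k) < f (N + Suc k)" using assms by (intro strict_mono_onD[OF assms]) auto
  then show ?case using Suc by simp
qed

lemma eventually_ge_seq:
  fixes f :: "nat \<Rightarrow> nat"
  assumes "\<exists>N. strict_mono_on {N..} f"
  shows "eventually (\<lambda>n. B \<le> f n) at_top"
proof -
  obtain N where N: "strict_mono_on {N..} f" using assms by blast
  have "B \<le> f n" if "N + B \<le> n" for n
  proof -
    have "n - N \<le> f (N + (n - N))" by (rule strict_mono_on_ge[OF N])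
    then show ?thesis using that by simp
  qed
  then show ?thesis unfolding eventually_at_top_linorder by blast
qed

lemma eventually_q_ge:
  assumes "0 < \<alpha>" "\<alpha> < 1" "\<alpha> \<notin> \<rat>"
  shows "eventually (\<lambda>n. B \<le> real (cf_q \<alpha> n)) at_top"
proof -
  obtain b :: nat where b: "B \<le> real b" using real_arch_simple by blast
  have "B \<le> real (cf_q \<alpha> n)" if nb: "Suc b \<le> n" for n
  proof -
    obtain m where m: "n = Suc m" using nb by (cases n) auto
    have "m \<le> cf_q \<alpha> (Suc m)" using cf_q_growth[OF assms, of m] by blast
    then show ?thesis using b m nb by simp
  qed
  then show ?thesis unfolding eventually_at_top_linorder by blast
qed

lemma pi_sq': "pi^2 \<le> (16::real)"
proof -
  have "pi^2 \<le> (4::real)^2" by (rule power_mono) (use pi_less_4 in auto)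
  then show ?thesis by simp
qed

lemma conv_B:
  fixes t q K :: real
  assumes t: "1 \<le> t" and q: "0 < q" and K: "0 < K" and tq: "t^2 \<le> K^2 * q" and pw: "p \<le> 2 / t"
  shows "18 * pi^2 * t^2 / q^2 + 2 * p + 16 / t + 166 / q \<le> (288 * K^4 + 166 * K^2 + 20) / t"
proof -
  have iq: "1 / q \<le> K^2 / t" 
  proof -
    have "1 / q \<le> K^2 / t^2" using tq q t by (simp add: field_simps)
    also have "\<dots> \<le> K^2 / t" using t by (intro divide_left_mono) (auto simp: power2_eq_square)
    finally show ?thesis .
  qed
  have "t^2 / q^2 = (t^2 / q) * (1 / q)" by (simp add: power2_eq_square)
  also have "\<dots> \<le> K^2 * (K^2 / t)"
    using tq q iq by (intro mult_mono) (auto simp: field_simps)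
  finally have a: "t^2 / q^2 \<le> K^4 / t" by (simp add: power_def)
  have "18 * pi^2 * t^2 / q^2 = 18 * pi^2 * (t^2 / q^2)" by simp
  also have "\<dots> \<le> 18 * 16 * (K^4 / t)" using a pi_sq' by (intro mult_mono) auto
  finally have b: "18 * pi^2 * t^2 / q^2 \<le> 288 * (K^4 / t)" by simp
  have c: "166 / q \<le> 166 * (K^2 / t)" using iq by simp
  have "18 * pi^2 * t^2 / q^2 + 2 * p + 16 / t + 166 / q \<le> 288 * (K^4 / t) + 2 * (2 / t) + 16 / t + 166 * (K^2 / t)"
    using b c pw by linarith
  also have "\<dots> = (288 * K^4 + 166 * K^2 + 20) / t" using t by (simp add: field_simps)
  finally show ?thesis .
qed

lemma conv_C:
  fixes k q K :: real
  assumes k: "1 \<le> k" and q: "1 \<le> q" and K: "0 < K" and kq: "k^2 \<le> K^2 * q"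
  shows "12 * k / q^2 + 9 / k + 4 / q^2 \<le> (12 * K^4 + 4 * K^2 + 9) / k"
proof -
  have iq2: "1 / q \<le> K^2 / k^2" using kq q k by (simp add: field_simps)
  have iq: "1 / q \<le> K^2 / k"
  proof -
    have "K^2 / k^2 \<le> K^2 / k" using k by (intro divide_left_mono) (auto simp: power2_eq_square)
    then show ?thesis using iq2 by linarith
  qed
  have "k / q^2 = k * (1 / q)^2" by (simp add: power_divide)
  also have "\<dots> \<le> k * (K^2 / k^2)^2" using iq2 q k by (intro mult_left_mono power_mono) auto
  also have "\<dots> = K^4 / k^3" using k by (simp add: field_simps power2_eq_square power3_eq_cube power4_eq_xxxx)
  also have "\<dots> \<le> K^4 / k"
  proof -
    have "1 * 1 \<le> k * k" by (rule mult_mono) (use k in auto)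
    then have "k * 1 \<le> k * (k * k)" using k by (intro mult_left_mono) auto
    then have "k \<le> k^3" by (simp add: power3_eq_cube)
    then show ?thesis using k by (intro divide_left_mono) auto
  qed
  finally have a: "k / q^2 \<le> K^4 / k" .
  have "1 / q^2 \<le> 1 / q" using q by (intro divide_left_mono) (auto simp: power2_eq_square)
  then have b: "1 / q^2 \<le> K^2 / k" using iq by linarith
  have "12 * k / q^2 + 9 / k + 4 / q^2 \<le> 12 * (K^4 / k) + 9 / k + 4 * (K^2 / k)"
    using a b by simp
  also have "\<dots> = (12 * K^4 + 4 * K^2 + 9) / k" using k by (simp add: field_simps)
  finally show ?thesis .
qed

lemma tau_le_M:
  fixes x q :: nat and K :: real
  assumes K: "0 < K" and q: "(2 * K + 2)^2 \<le> real q" and x: "real x \<le> K * sqrt (real q)"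
  shows "x \<le> (q - 1) div 2" "real x ^ 2 \<le> K^2 * real q"
proof -
  define s where "s = sqrt (real q)"
  have s2: "s^2 = real q" unfolding s_def by simp
  have "sqrt ((2 * K + 2)^2) \<le> s" unfolding s_def using q by (rule real_sqrt_le_mono)
  then have s: "2 * K + 2 \<le> s" using K by simp
  have "K * s \<le> (s / 2 - 1) * s" using s K by (intro mult_right_mono) auto
  also have "\<dots> = s^2 / 2 - s" by (simp add: power2_eq_square algebra_simps)
  also have "\<dots> \<le> real q / 2 - 1" using s2 s K by simp
  finally have "real x \<le> real q / 2 - 1" using x unfolding s_def by linarith
  then have "2 * x + 2 \<le> q" by linarith
  then show "x \<le> (q - 1) div 2" by linarith
  have "real x ^ 2 \<le> (K * s)^2" using x unfolding s_def by (intro power_mono) auto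
  also have "\<dots> = K^2 * real q" using s2 by (simp add: power_mult_distrib)
  finally show "real x ^ 2 \<le> K^2 * real q" .
qed

theorem lemma3p2:
  fixes \<alpha> :: real and \<tau> \<kappa> :: "nat \<Rightarrow> nat"
  assumes "0 < \<alpha>" "\<alpha> < 1" "\<alpha> \<notin> \<rat>"
    and "\<exists>N. strict_mono_on {N..} \<tau>" "\<exists>N. strict_mono_on {N..} \<kappa>"
    and "(\<lambda>n. real (\<tau> n)) \<in> O(\<lambda>n. sqrt (real (cf_q \<alpha> n)))"
    and "(\<lambda>n. real (\<kappa> n)) \<in> O(\<lambda>n. sqrt (real (cf_q \<alpha> n)))"
  shows "((\<lambda>n. A_n \<alpha> n / (2 * pi * cc \<alpha> n) - 1) \<in> O(\<lambda>n. (Lam \<alpha> n)\<^sup>2))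
    \<and> ((\<lambda>n. ln (B_n \<alpha> n)
           - (- 2 * pi\<^sup>2 * cc \<alpha> n / (real (cf_q \<alpha> n))\<^sup>2
                * (\<Sum>t = 1..M_n \<alpha> n - 1. Dsum t (alpha_minus \<alpha> n)
                     / (sin (pi * real t / real (cf_q \<alpha> n))
                        * sin (pi * real (t + 1) / real (cf_q \<alpha> n))))
              - 2 * (\<Sum>t = 1..\<tau> n. \<Sum>j = 2..\<tau> n.
                       (1 / real j) * (cc \<alpha> n * xi \<alpha> n t / real t) ^ j)))
         \<in> O(\<lambda>n. 1 / real (\<tau> n)))
    \<and> ((\<lambda>n. C_n \<alpha> n
           - (\<Prod>t = 1..\<kappa> n. 1 - 1 / (4 * (real t / cc \<alpha> n - xi \<alpha> n t)\<^sup>2)))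
         \<in> O(\<lambda>n. 1 / real (\<kappa> n)))"
proof -
  note a = assms(1-3)
  obtain K1 where K1: "K1 > 0" "eventually (\<lambda>n. norm (real (\<tau> n)) \<le> K1 * norm (sqrt (real (cf_q \<alpha> n)))) at_top"
    using landau_o.bigE[OF assms(6)] by blast
  obtain K2 where K2: "K2 > 0" "eventually (\<lambda>n. norm (real (\<kappa> n)) \<le> K2 * norm (sqrt (real (cf_q \<alpha> n)))) at_top"
    using landau_o.bigE[OF assms(7)] by blast
  define K where "K = max K1 K2"
  have K: "0 < K" "K1 \<le> K" "K2 \<le> K" unfolding K_def using K1 K2 by auto
  have evq: "eventually (\<lambda>n. max 100 ((2 * K + 2)^2) \<le> real (cf_q \<alpha> n)) at_top"
    by (rule eventually_q_ge[OF a])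
  have evn: "eventually (\<lambda>n::nat. 1 \<le> n) at_top" by (rule eventually_ge_at_top)
  have evt: "eventually (\<lambda>n. 3 \<le> \<tau> n) at_top" by (rule eventually_ge_seq[OF assms(4)])
  have evk: "eventually (\<lambda>n. 1 \<le> \<kappa> n) at_top" by (rule eventually_ge_seq[OF assms(5)])
  have P1: "(\<lambda>n. A_n \<alpha> n / (2 * pi * cc \<alpha> n) - 1) \<in> O(\<lambda>n. (Lam \<alpha> n)\<^sup>2)"
  proof (rule bigoI)
    show "eventually (\<lambda>n. norm (A_n \<alpha> n / (2 * pi * cc \<alpha> n) - 1) \<le> 3 * norm ((Lam \<alpha> n)\<^sup>2)) at_top"
      using evq evn
    proof eventually_elim
      case (elim n)
      have "100 \<le> cf_q \<alpha> n" using elim by linarith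
      then show ?case using per_n(1)[OF a, of n] elim by simp
    qed
  qed
  have P2: "(\<lambda>n. ln (B_n \<alpha> n)
           - (- 2 * pi\<^sup>2 * cc \<alpha> n / (real (cf_q \<alpha> n))\<^sup>2
                * (\<Sum>t = 1..M_n \<alpha> n - 1. Dsum t (alpha_minus \<alpha> n)
                     / (sin (pi * real t / real (cf_q \<alpha> n))
                        * sin (pi * real (t + 1) / real (cf_q \<alpha> n))))
              - 2 * (\<Sum>t = 1..\<tau> n. \<Sum>j = 2..\<tau> n.
                       (1 / real j) * (cc \<alpha> n * xi \<alpha> n t / real t) ^ j)))
         \<in> O(\<lambda>n. 1 / real (\<tau> n))" (is "?f \<in> _")
  proof (rule bigoI)
    show "eventually (\<lambda>n. norm (?f n) \<le> (288 * K^4 + 166 * K^2 + 20) * norm (1 / real (\<tau> n))) at_top"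
      using evq evn evt K1(2)
    proof eventually_elim
      case (elim n)
      have q100: "100 \<le> cf_q \<alpha> n" using elim by linarith
      have qK: "(2 * K + 2)^2 \<le> real (cf_q \<alpha> n)" using elim by linarith
      have "K1 * sqrt (real (cf_q \<alpha> n)) \<le> K * sqrt (real (cf_q \<alpha> n))"
        by (rule mult_right_mono) (use K in auto)
      moreover have "real (\<tau> n) \<le> K1 * sqrt (real (cf_q \<alpha> n))" using elim by simp
      ultimately have tK: "real (\<tau> n) \<le> K * sqrt (real (cf_q \<alpha> n))" by linarith
      note TM = tau_le_M[OF K(1) qK tK]
      have b: "\<bar>?f n\<bar> \<le> 18 * pi^2 * real (\<tau> n)^2 / real (cf_q \<alpha> n)^2 + 2 * (real (\<tau> n) / 2^(\<tau> n))
               + 16 / real (\<tau> n) + 166 / real (cf_q \<alpha> n)"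
        using per_n(2)[OF a elim(2) q100, of "\<tau> n"] elim TM unfolding M_n_def by simp
      have c: "\<dots> \<le> (288 * K^4 + 166 * K^2 + 20) / real (\<tau> n)"
        by (rule conv_B) (use elim q100 K TM tau_pow_bound[of "\<tau> n"] in auto)
      show ?case using b c by simp
    qed
  qed
  have P3: "(\<lambda>n. C_n \<alpha> n
           - (\<Prod>t = 1..\<kappa> n. 1 - 1 / (4 * (real t / cc \<alpha> n - xi \<alpha> n t)\<^sup>2)))
         \<in> O(\<lambda>n. 1 / real (\<kappa> n))" (is "?g \<in> _")
  proof (rule bigoI)
    show "eventually (\<lambda>n. norm (?g n) \<le> (12 * K^4 + 4 * K^2 + 9) * norm (1 / real (\<kappa> n))) at_top"
      using evq evn evk K2(2)
    proof eventually_elim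
      case (elim n)
      have q100: "100 \<le> cf_q \<alpha> n" using elim by linarith
      have qK: "(2 * K + 2)^2 \<le> real (cf_q \<alpha> n)" using elim by linarith
      have "K2 * sqrt (real (cf_q \<alpha> n)) \<le> K * sqrt (real (cf_q \<alpha> n))"
        by (rule mult_right_mono) (use K in auto)
      moreover have "real (\<kappa> n) \<le> K2 * sqrt (real (cf_q \<alpha> n))" using elim by simp
      ultimately have tK: "real (\<kappa> n) \<le> K * sqrt (real (cf_q \<alpha> n))" by linarith
      note TM = tau_le_M[OF K(1) qK tK]
      have b: "\<bar>?g n\<bar> \<le> 12 * real (\<kappa> n) / real (cf_q \<alpha> n)^2 + 9 / real (\<kappa> n) + 4 / real (cf_q \<alpha> n)^2"
        using per_n(3)[OF a elim(2) q100, of "\<kappa> n"] elim TM unfolding M_n_def by simp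
      have c: "\<dots> \<le> (12 * K^4 + 4 * K^2 + 9) / real (\<kappa> n)"
        by (rule conv_C) (use elim q100 K TM in auto)
      show ?case using b c by simp
    qed
  qed
  show ?thesis using P1 P2 P3 by blast
qed

end
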